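(* For any two grapheurs $\mathsf M,\mathsf N\in\mathcal M$ and any $k\in\mathbb N$, $W_1(\mathsf G_k[\mathsf M],\mathsf G_k[\mathsf N])\le k^2\,W_\square(\mathsf M,\mathsf N)$ and $W_\square(\mathsf M,\mathsf N)\le W_1(\mathsf G_k[\mathsf M],\mathsf G_k[\mathsf N])+\frac4k$.
   Context: Let $\lambda$, $\lambda^2$ be Lebesgue measure on $[0,1]$ and $[0,1]^2$, and $\lambda_D$ the uniform probability measure on the diagonal of $[0,1]^2$. A grapheur is a random probability measure on $[0,1]^2$ of the form $\mathsf M=\sum_{i,j\in\mathbb N}E_{i,j}\delta_{(T_i,T_j)}+\sum_{i}[\sigma_i(\delta_{T_i}\otimes\lambda)+\varsigma_i(\lambda\otimes\delta_{T_i})]+\theta\lambda^2+\vartheta\lambda_D$ with $T_i$ iid uniform on $[0,1]$ and deterministic $E\in\mathbb R_{\ge0}^{\mathbb N\times\mathbb N}$, $\sigma,\varsigma\in\mathbb R^{\mathbb N}_{\ge0}$, $\theta,\vartheta\ge0$ summing in total to $1$; $\mathcal M$ is the set of grapheurs. $W_\square(\mathsf M_1,\mathsf M_2)=\inf\sup_{S,T\subseteq[0,1]\text{ intervals}}\mathbb E|\mathsf M_1'(S\times T)-\mathsf M_2'(S\times T)|$, infimum over couplings $(\mathsf M_1',\mathsf M_2')$ of $\mathsf M_1,\mathsf M_2$. $\mathsf G_k[\mathsf M]$ is the random $k\times k$ matrix with entries $\mathsf M(I_i^{(k)}\times I_j^{(k)})$, $I_i^{(k)}=[(i-1)/k,i/k)$.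 For random matrices $X,Y\in\mathbb R^{k\times k}$, $W_1(X,Y)=\inf\mathbb E\|X'-Y'\|_1$ over couplings, with $\|\cdot\|_1$ the entrywise $\ell_1$ norm. *)

theory Defs
  imports "HOL-Probability.Probability"
begin

definition sq_space :: "(real \<times> real) measure" where
  "sq_space = restrict_space borel ({0..1} \<times> {0..1})"

definition grapheur_params ::
  "(nat \<Rightarrow> nat \<Rightarrow> real) \<Rightarrow> (nat \<Rightarrow> real) \<Rightarrow> (nat \<Rightarrow> real) \<Rightarrow> real \<Rightarrow> real \<Rightarrow> bool" where
  "grapheur_params E \<sigma> \<sigma>' \<theta> \<phi> \<longleftrightarrow>
     (\<forall>i j. 0 \<le> E i j) \<and> (\<forall>i. 0 \<le> \<sigma> i) \<and> (\<forall>i. 0 \<le> \<sigma>' i) \<and> 0 \<le> \<theta> \<and> 0 \<le> \<phi> \<and>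
     (\<lambda>(i,j). E i j) summable_on UNIV \<and> \<sigma> summable_on UNIV \<and> \<sigma>' summable_on UNIV \<and>
     (\<Sum>\<^sub>\<infinity>(i,j). E i j) + (\<Sum>\<^sub>\<infinity>i. \<sigma> i) + (\<Sum>\<^sub>\<infinity>i. \<sigma>' i) + \<theta> + \<phi> = 1"

text \<open>The (deterministic) measure obtained for a realisation t = (T_i) of the points:
  sum_{i,j} E_ij delta_(t_i,t_j) + sum_i [sigma_i (delta_(t_i) x lambda) + varsigma_i (lambda x delta_(t_i))]
  + theta lambda^2 + vartheta lambda_D.\<close>
definition grapheur_at ::
  "(nat \<Rightarrow> nat \<Rightarrow> real) \<Rightarrow> (nat \<Rightarrow> real) \<Rightarrow> (nat \<Rightarrow> real) \<Rightarrow> real \<Rightarrow> real \<Rightarrow> (nat \<Rightarrow> real)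
     \<Rightarrow> (real \<times> real) measure" where
  "grapheur_at E \<sigma> \<sigma>' \<theta> \<phi> t = measure_of (space sq_space) (sets sq_space)
     (\<lambda>A. (\<Sum>i. \<Sum>j. ennreal (E i j) * indicator A (t i, t j))
        + (\<Sum>i. ennreal (\<sigma> i) * emeasure lborel {x \<in> {0..1}. (t i, x) \<in> A}
               + ennreal (\<sigma>' i) * emeasure lborel {x \<in> {0..1}. (x, t i) \<in> A})
        + ennreal \<theta> * emeasure (lborel \<Otimes>\<^sub>M lborel) (A \<inter> ({0..1} \<times> {0..1}))
        + ennreal \<phi> * emeasure lborel {x \<in> {0..1}. (x, x) \<in> A})"

definition iid_uniform :: "(nat \<Rightarrow> real) measure" where
  "iid_uniform = PiM UNIV (\<lambda>_. uniform_measure lborel {0..1::real})"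

definition grapheur_law ::
  "(nat \<Rightarrow> nat \<Rightarrow> real) \<Rightarrow> (nat \<Rightarrow> real) \<Rightarrow> (nat \<Rightarrow> real) \<Rightarrow> real \<Rightarrow> real
     \<Rightarrow> (real \<times> real) measure measure" where
  "grapheur_law E \<sigma> \<sigma>' \<theta> \<phi> =
     distr iid_uniform (subprob_algebra sq_space) (grapheur_at E \<sigma> \<sigma>' \<theta> \<phi>)"

text \<open>The set \<M> of grapheurs (identified with their laws).\<close>
definition grapheurs :: "(real \<times> real) measure measure set" where
  "grapheurs = {grapheur_law E \<sigma> \<sigma>' \<theta> \<phi> | E \<sigma> \<sigma>' \<theta> \<phi>. grapheur_params E \<sigma> \<sigma>' \<theta> \<phi>}"

definition couplings :: "'a measure \<Rightarrow> 'b measure \<Rightarrow> ('a \<times> 'b) measure set" where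
  "couplings P Q = {C. prob_space C \<and> sets C = sets (P \<Otimes>\<^sub>M Q) \<and>
                       distr C P fst = P \<and> distr C Q snd = Q}"

definition W_box :: "(real \<times> real) measure measure \<Rightarrow> (real \<times> real) measure measure \<Rightarrow> ennreal" where
  "W_box P Q = (\<Sqinter>C \<in> couplings P Q.
      \<Squnion>(S,T) \<in> {(S,T). is_interval S \<and> S \<subseteq> {0..1} \<and> is_interval T \<and> T \<subseteq> {0..1::real}}.
        \<integral>\<^sup>+ mm. ennreal \<bar>measure (fst mm) (S \<times> T) - measure (snd mm) (S \<times> T)\<bar> \<partial>C)"

text \<open>k x k real matrices, indexed by {0..<k} x {0..<k} (entry (i,j) corresponds to I_(i+1), I_(j+1)).\<close>
definition mat_space :: "nat \<Rightarrow> (nat \<times> nat \<Rightarrow> real) measure" where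
  "mat_space k = PiM ({..<k} \<times> {..<k}) (\<lambda>_. borel)"

text \<open>I_(i+1)^(k) = [i/k, (i+1)/k).\<close>
definition I_int :: "nat \<Rightarrow> nat \<Rightarrow> real set" where
  "I_int k i = {real i / real k ..< real (Suc i) / real k}"

definition G_law :: "nat \<Rightarrow> (real \<times> real) measure measure \<Rightarrow> (nat \<times> nat \<Rightarrow> real) measure" where
  "G_law k P = distr P (mat_space k)
     (\<lambda>m. \<lambda>ij \<in> {..<k} \<times> {..<k}. measure m (I_int k (fst ij) \<times> I_int k (snd ij)))"

definition W_1 :: "nat \<Rightarrow> (nat \<times> nat \<Rightarrow> real) measure \<Rightarrow> (nat \<times> nat \<Rightarrow> real) measure \<Rightarrow> ennreal" where
  "W_1 k P Q = (\<Sqinter>C \<in> couplings P Q.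
      \<integral>\<^sup>+ XY. ennreal (\<Sum>ij \<in> {..<k} \<times> {..<k}. \<bar>fst XY ij - snd XY ij\<bar>) \<partial>C)"

end

theory Submission
  imports Defs
begin

lemma sq_borel: "({0..1} \<times> {0..1} :: (real\<times>real) set) \<in> sets borel"
  by (auto intro!: borel_closed closed_Times)

lemma space_sq: "space sq_space = {0..1} \<times> {0..1}"
  by (simp add: sq_space_def space_restrict_space)

lemma sets_sq: "A \<in> sets sq_space \<longleftrightarrow> A \<in> sets borel \<and> A \<subseteq> {0..1} \<times> {0..1}"
  unfolding sq_space_def
  by (subst sets_restrict_space_iff) (use sq_borel in auto)

lemma ca_preimage:
  assumes f: "f \<in> Nn \<rightarrow>\<^sub>M (borel :: (real\<times>real) measure)" and S: "S \<in> sets Nn"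
  shows "countably_additive (sets sq_space) (\<lambda>A. emeasure Nn (f -` A \<inter> S))"
proof (rule countably_additiveI)
  fix F :: "nat \<Rightarrow> (real\<times>real) set"
  assume F: "range F \<subseteq> sets sq_space" "disjoint_family F" "\<Union>(range F) \<in> sets sq_space"
  have m: "f -` F i \<inter> S \<in> sets Nn" for i
  proof -
    have "F i \<in> sets borel" using F(1) sets_sq by auto
    then have "f -` F i \<inter> space Nn \<in> sets Nn" by (rule measurable_sets[OF f])
    then have "(f -` F i \<inter> space Nn) \<inter> S \<in> sets Nn" using S by auto
    moreover have "(f -` F i \<inter> space Nn) \<inter> S = f -` F i \<inter> S"
      using sets.sets_into_space[OF S] by auto
    ultimately show ?thesis by simp
  qed
  have "(\<Sum>i. emeasure Nn (f -` F i \<inter> S)) = emeasure Nn (\<Union>i. f -` F i \<inter> S)"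
    using m F(2) by (intro suminf_emeasure) (auto simp: disjoint_family_on_def, blast)
  also have "(\<Union>i. f -` F i \<inter> S) = f -` (\<Union>(range F)) \<inter> S" by auto
  finally show "(\<Sum>i. emeasure Nn (f -` F i \<inter> S)) = emeasure Nn (f -` \<Union>(range F) \<inter> S)" .
qed

lemma ca_indicator: "countably_additive (sets sq_space) (\<lambda>A. indicator A x :: ennreal)"
  by (rule countably_additiveI) (simp add: suminf_indicator)

lemma ca_cmult:
  assumes "countably_additive M \<mu>"
  shows "countably_additive M (\<lambda>A. (c::ennreal) * \<mu> A)"
  using assms unfolding countably_additive_def by simp

lemma ca_add:
  assumes "countably_additive M \<mu>" "countably_additive M \<nu>"
  shows "countably_additive M (\<lambda>A. \<mu> A + (\<nu> A :: ennreal))"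
  using assms unfolding countably_additive_def
  by (simp add: suminf_add[OF summableI summableI, symmetric])

lemma ennreal_suminf_swap:
  "(\<Sum>n. \<Sum>i. g n i :: ennreal) = (\<Sum>i. \<Sum>n. g n i)"
proof -
  have "(\<Sum>n. \<Sum>i. g n i) = (\<integral>\<^sup>+n. (\<Sum>i. g n i) \<partial>count_space UNIV)"
    by (simp add: nn_integral_count_space_nat)
  also have "\<dots> = (\<Sum>i. \<integral>\<^sup>+n. g n i \<partial>count_space UNIV)"
    by (rule nn_integral_suminf) simp
  also have "\<dots> = (\<Sum>i. \<Sum>n. g n i)"
    by (simp add: nn_integral_count_space_nat)
  finally show ?thesis .
qed

lemma ca_suminf:
  assumes "\<And>i. countably_additive M (\<mu> i)"
  shows "countably_additive M (\<lambda>A. \<Sum>i. (\<mu> i A :: ennreal))"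
proof (rule countably_additiveI)
  fix F :: "nat \<Rightarrow> _" assume F: "range F \<subseteq> M" "disjoint_family F" "\<Union>(range F) \<in> M"
  have "(\<Sum>n. \<Sum>i. \<mu> i (F n)) = (\<Sum>i. \<Sum>n. \<mu> i (F n))" by (rule ennreal_suminf_swap)
  also have "\<dots> = (\<Sum>i. \<mu> i (\<Union>(range F)))"
    using assms F unfolding countably_additive_def by simp
  finally show "(\<Sum>n. \<Sum>i. \<mu> i (F n)) = (\<Sum>i. \<mu> i (\<Union>(range F)))" .
qed

lemma pair1_meas: "(\<lambda>x::real. (y::real, x)) \<in> lborel \<rightarrow>\<^sub>M (borel :: (real\<times>real) measure)"
  unfolding borel_prod[symmetric] by measurable
lemma pair2_meas: "(\<lambda>x::real. (x, y::real)) \<in> lborel \<rightarrow>\<^sub>M (borel :: (real\<times>real) measure)"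
  unfolding borel_prod[symmetric] by measurable
lemma diag_meas: "(\<lambda>x::real. (x, x)) \<in> lborel \<rightarrow>\<^sub>M (borel :: (real\<times>real) measure)"
  unfolding borel_prod[symmetric] by measurable

lemma ca_sec1: "countably_additive (sets sq_space) (\<lambda>A. emeasure lborel {x \<in> {0..1::real}. (y, x) \<in> A})"
proof -
  have "(\<lambda>A. emeasure lborel {x \<in> {0..1::real}. (y, x) \<in> A}) = (\<lambda>A. emeasure lborel ((\<lambda>x. (y,x)) -` A \<inter> {0..1}))"
    by (auto intro!: arg_cong[where f="emeasure lborel"])
  then show ?thesis using ca_preimage[OF pair1_meas, of "{0..1}"] by simp
qed

lemma ca_sec2: "countably_additive (sets sq_space) (\<lambda>A. emeasure lborel {x \<in> {0..1::real}. (x, y) \<in> A})"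
proof -
  have "(\<lambda>A. emeasure lborel {x \<in> {0..1::real}. (x, y) \<in> A}) = (\<lambda>A. emeasure lborel ((\<lambda>x. (x,y)) -` A \<inter> {0..1}))"
    by (auto intro!: arg_cong[where f="emeasure lborel"])
  then show ?thesis using ca_preimage[OF pair2_meas, of "{0..1}"] by simp
qed

lemma ca_diag: "countably_additive (sets sq_space) (\<lambda>A. emeasure lborel {x \<in> {0..1::real}. (x, x) \<in> A})"
proof -
  have "(\<lambda>A. emeasure lborel {x \<in> {0..1::real}. (x, x) \<in> A}) = (\<lambda>A. emeasure lborel ((\<lambda>x. (x,x)) -` A \<inter> {0..1}))"
    by (auto intro!: arg_cong[where f="emeasure lborel"])
  then show ?thesis using ca_preimage[OF diag_meas, of "{0..1}"] by simp
qed

lemma ca_sq: "countably_additive (sets sq_space) (\<lambda>A. emeasure (lborel \<Otimes>\<^sub>M lborel) (A \<inter> ({0..1::real} \<times> {0..1::real})))"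
proof -
  have "(\<lambda>A. emeasure (lborel \<Otimes>\<^sub>M lborel) (A \<inter> ({0..1::real} \<times> {0..1::real}))) =
     (\<lambda>A. emeasure lborel ((\<lambda>x. x) -` A \<inter> ({0..1} \<times> {0..1})))"
    by (simp add: lborel_prod)
  moreover have "(\<lambda>x. x) \<in> lborel \<rightarrow>\<^sub>M (borel :: (real\<times>real) measure)" by simp
  ultimately show ?thesis using ca_preimage[of "\<lambda>x. x" lborel "{0..1} \<times> {0..1}"] sq_borel by simp
qed

definition gmu :: "(nat \<Rightarrow> nat \<Rightarrow> real) \<Rightarrow> (nat \<Rightarrow> real) \<Rightarrow> (nat \<Rightarrow> real) \<Rightarrow> real \<Rightarrow> real \<Rightarrow> (nat \<Rightarrow> real) \<Rightarrow> (real \<times> real) set \<Rightarrow> ennreal" where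
  "gmu E \<sigma> \<sigma>' \<theta> \<phi> t A = (\<Sum>i. \<Sum>j. ennreal (E i j) * indicator A (t i, t j))
        + (\<Sum>i. ennreal (\<sigma> i) * emeasure lborel {x \<in> {0..1}. (t i, x) \<in> A}
               + ennreal (\<sigma>' i) * emeasure lborel {x \<in> {0..1}. (x, t i) \<in> A})
        + ennreal \<theta> * emeasure (lborel \<Otimes>\<^sub>M lborel) (A \<inter> ({0..1} \<times> {0..1}))
        + ennreal \<phi> * emeasure lborel {x \<in> {0..1}. (x, x) \<in> A}"

lemma grapheur_at_eq: "grapheur_at E \<sigma> \<sigma>' \<theta> \<phi> t = measure_of (space sq_space) (sets sq_space) (gmu E \<sigma> \<sigma>' \<theta> \<phi> t)"
  unfolding grapheur_at_def gmu_def[abs_def] ..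

lemma gmu_ca: "countably_additive (sets sq_space) (gmu E \<sigma> \<sigma>' \<theta> \<phi> t)"
  unfolding gmu_def[abs_def]
  by (intro ca_add ca_cmult ca_suminf ca_indicator ca_sec1 ca_sec2 ca_sq ca_diag)

lemma gmu_pos: "positive (sets sq_space) (gmu E \<sigma> \<sigma>' \<theta> \<phi> t)"
  unfolding positive_def gmu_def by simp

lemma emeasure_ga: "A \<in> sets sq_space \<Longrightarrow> emeasure (grapheur_at E \<sigma> \<sigma>' \<theta> \<phi> t) A = gmu E \<sigma> \<sigma>' \<theta> \<phi> t A"
  unfolding grapheur_at_eq
  by (rule emeasure_measure_of_sigma[OF sets.sigma_algebra_axioms gmu_pos gmu_ca])

lemma sets_ga[simp]: "sets (grapheur_at E \<sigma> \<sigma>' \<theta> \<phi> t) = sets sq_space"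
  unfolding grapheur_at_eq by (rule sets.sets_measure_of_eq)

lemma space_ga[simp]: "space (grapheur_at E \<sigma> \<sigma>' \<theta> \<phi> t) = space sq_space"
  unfolding grapheur_at_eq by simp


lemma ennreal_sum_single:
  assumes "\<And>i. 0 \<le> f i" "f summable_on UNIV"
  shows "(\<Sum>i. ennreal (f i)) = ennreal (\<Sum>\<^sub>\<infinity>i. f i)"
proof -
  have "(f has_sum (\<Sum>\<^sub>\<infinity>i. f i)) UNIV" using assms(2) by (rule has_sum_infsum)
  then have "f sums (\<Sum>\<^sub>\<infinity>i. f i)" by (rule has_sum_imp_sums)
  then show ?thesis by (rule suminf_ennreal_eq[OF assms(1)])
qed

lemma ennreal_sum_double:
  fixes E :: "nat \<Rightarrow> nat \<Rightarrow> real"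
  assumes nn: "\<And>i j. 0 \<le> E i j" and S0: "(\<lambda>(i,j). E i j) summable_on UNIV"
  shows "(\<Sum>i. \<Sum>j. ennreal (E i j)) = ennreal (\<Sum>\<^sub>\<infinity>(i,j). E i j)"
proof -
  have S: "(\<lambda>(i,j). E i j) summable_on Sigma UNIV (\<lambda>_. UNIV)" using S0 by simp
  have Ei: "E i summable_on UNIV" for i using summable_on_SigmaD1[OF S] by simp
  have "((\<lambda>i. \<Sum>\<^sub>\<infinity>j. E i j) has_sum (\<Sum>\<^sub>\<infinity>(i,j). E i j)) UNIV"
  proof (rule has_sum_Sigma'[where B="\<lambda>_. UNIV" and f="\<lambda>(i,j). E i j"])
    show "((\<lambda>(i,j). E i j) has_sum (\<Sum>\<^sub>\<infinity>(i,j). E i j)) (Sigma UNIV (\<lambda>_. UNIV))"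
      using S0 has_sum_infsum by fastforce
    show "((\<lambda>y. (\<lambda>(i,j). E i j) (x, y)) has_sum (\<Sum>\<^sub>\<infinity>j. E x j)) UNIV" for x
      using Ei[of x] has_sum_infsum by fastforce
  qed
  then have "(\<lambda>i. \<Sum>\<^sub>\<infinity>j. E i j) sums (\<Sum>\<^sub>\<infinity>(i,j). E i j)" by (rule has_sum_imp_sums)
  then have "(\<Sum>i. ennreal (\<Sum>\<^sub>\<infinity>j. E i j)) = ennreal (\<Sum>\<^sub>\<infinity>(i,j). E i j)"
    by (rule suminf_ennreal_eq[rotated]) (auto intro!: infsum_nonneg nn)
  moreover have "(\<Sum>j. ennreal (E i j)) = ennreal (\<Sum>\<^sub>\<infinity>j. E i j)" for i
    using ennreal_sum_single[OF nn Ei] .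
  ultimately show ?thesis by simp
qed

lemma params_total:
  assumes "grapheur_params E \<sigma> \<sigma>' \<theta> \<phi>"
  shows "(\<Sum>i. \<Sum>j. ennreal (E i j)) + (\<Sum>i. ennreal (\<sigma> i) + ennreal (\<sigma>' i)) + ennreal \<theta> + ennreal \<phi> = 1"
proof -
  note P = assms[unfolded grapheur_params_def]
  have a: "(\<Sum>i. \<Sum>j. ennreal (E i j)) = ennreal (\<Sum>\<^sub>\<infinity>(i,j). E i j)"
    using P by (intro ennreal_sum_double) auto
  have b: "(\<Sum>i. ennreal (\<sigma> i)) = ennreal (\<Sum>\<^sub>\<infinity>i. \<sigma> i)"
    using P by (intro ennreal_sum_single) auto
  have c: "(\<Sum>i. ennreal (\<sigma>' i)) = ennreal (\<Sum>\<^sub>\<infinity>i. \<sigma>' i)"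
    using P by (intro ennreal_sum_single) auto
  have d: "(\<Sum>i. ennreal (\<sigma> i) + ennreal (\<sigma>' i)) = (\<Sum>i. ennreal (\<sigma> i)) + (\<Sum>i. ennreal (\<sigma>' i))"
    by (simp add: suminf_add[OF summableI summableI])
  have nn: "0 \<le> (\<Sum>\<^sub>\<infinity>(i,j). E i j)" "0 \<le> (\<Sum>\<^sub>\<infinity>i. \<sigma> i)" "0 \<le> (\<Sum>\<^sub>\<infinity>i. \<sigma>' i)"
    using P by (auto intro!: infsum_nonneg)
  have tot: "(\<Sum>\<^sub>\<infinity>(i,j). E i j) + (\<Sum>\<^sub>\<infinity>i. \<sigma> i) + (\<Sum>\<^sub>\<infinity>i. \<sigma>' i) + \<theta> + \<phi> = 1"
    using P by (simp add: add.assoc)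
  have "(\<Sum>i. \<Sum>j. ennreal (E i j)) + (\<Sum>i. ennreal (\<sigma> i) + ennreal (\<sigma>' i)) + ennreal \<theta> + ennreal \<phi>
     = ennreal ((\<Sum>\<^sub>\<infinity>(i,j). E i j) + (\<Sum>\<^sub>\<infinity>i. \<sigma> i) + (\<Sum>\<^sub>\<infinity>i. \<sigma>' i) + \<theta> + \<phi>)"
  proof -
    have th: "0 \<le> \<theta>" "0 \<le> \<phi>" using P by auto
    show ?thesis unfolding a b c d using nn th by (simp add: ennreal_plus)
  qed
  also have "\<dots> = 1" by (simp only: tot ennreal_1)
  finally show ?thesis .
qed

lemma gmu_le:
  assumes h1: "\<And>i j. indicator A (t i, t j) \<le> (u i j::ennreal)"
    and h2: "\<And>i. emeasure lborel {x\<in>{0..1}. (t i, x) \<in> A} \<le> v i"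
    and h3: "\<And>i. emeasure lborel {x\<in>{0..1}. (x, t i) \<in> A} \<le> v' i"
    and h4: "emeasure (lborel \<Otimes>\<^sub>M lborel) (A \<inter> ({0..1} \<times> {0..1})) \<le> w"
    and h5: "emeasure lborel {x\<in>{0..1}. (x,x) \<in> A} \<le> z"
  shows "gmu E \<sigma> \<sigma>' \<theta> \<phi> t A \<le> (\<Sum>i. \<Sum>j. ennreal (E i j) * u i j)
      + (\<Sum>i. ennreal (\<sigma> i) * v i + ennreal (\<sigma>' i) * v' i) + ennreal \<theta> * w + ennreal \<phi> * z"
  unfolding gmu_def
  by (intro add_mono mult_left_mono suminf_le summableI h1 h2 h3 h4 h5 allI) auto

lemma gmu_sub1:
  assumes "grapheur_params E \<sigma> \<sigma>' \<theta> \<phi>"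
  shows "gmu E \<sigma> \<sigma>' \<theta> \<phi> t A \<le> 1"
proof -
  have u: "emeasure lborel {x\<in>{0..1::real}. P x} \<le> 1" for P
  proof -
    have "emeasure lborel {x\<in>{0..1::real}. P x} \<le> emeasure lborel {0..1::real}"
      by (rule emeasure_mono) auto
    then show ?thesis by simp
  qed
  have w: "emeasure (lborel \<Otimes>\<^sub>M lborel) (A \<inter> ({0..1::real} \<times> {0..1::real})) \<le> 1"
  proof -
    have "emeasure (lborel \<Otimes>\<^sub>M lborel) (A \<inter> ({0..1::real} \<times> {0..1::real})) \<le> emeasure (lborel \<Otimes>\<^sub>M lborel) ({0..1::real} \<times> {0..1::real})"
      by (rule emeasure_mono) auto
    also have "\<dots> = 1" by (simp add: lborel.emeasure_pair_measure_Times)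
    finally show ?thesis .
  qed
  have "gmu E \<sigma> \<sigma>' \<theta> \<phi> t A \<le> (\<Sum>i. \<Sum>j. ennreal (E i j) * 1)
      + (\<Sum>i. ennreal (\<sigma> i) * 1 + ennreal (\<sigma>' i) * 1) + ennreal \<theta> * 1 + ennreal \<phi> * 1"
    by (rule gmu_le[OF _ u u w u]) (auto simp: indicator_def)
  also have "\<dots> = 1" using params_total[OF assms] by simp
  finally show ?thesis .
qed


lemma comp_meas[measurable]: "(\<lambda>t. t i) \<in> iid_uniform \<rightarrow>\<^sub>M borel"
proof -
  have 1: "(\<lambda>t. t i) \<in> iid_uniform \<rightarrow>\<^sub>M uniform_measure lborel {0..1::real}"
    unfolding iid_uniform_def by (rule measurable_component_singleton) simp
  show ?thesis using measurable_cong_sets[of iid_uniform iid_uniform "uniform_measure lborel {0..1::real}" borel] 1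
    by simp
qed

lemma pairij_meas[measurable]: "(\<lambda>t. (t i, t j)) \<in> iid_uniform \<rightarrow>\<^sub>M (borel :: (real \<times> real) measure)"
  unfolding borel_prod[symmetric] by measurable

lemma swap_borel_meas: "(\<lambda>p. (snd p, fst p)) \<in> (borel :: (real \<times> real) measure) \<rightarrow>\<^sub>M (borel :: (real \<times> real) measure)"
  unfolding borel_prod[symmetric] by measurable

lemma gmu_meas:
  assumes A: "A \<in> sets sq_space"
  shows "(\<lambda>t. gmu E \<sigma> \<sigma>' \<theta> \<phi> t A) \<in> borel_measurable iid_uniform"
proof -
  have Ab: "A \<in> sets borel" using A sets_sq by auto
  have m1: "(\<lambda>t. indicator A (t i, t j) :: ennreal) \<in> borel_measurable iid_uniform" for i j
    using measurable_compose[OF pairij_meas[of i j] borel_measurable_indicator[OF Ab]] by (simp add: comp_def)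
  define Q1 where "Q1 = A \<inter> (UNIV \<times> {0..1::real})"
  have U01: "UNIV \<times> {0..1::real} \<in> sets (borel::(real\<times>real) measure)" by (auto intro!: borel_closed closed_Times)
  have Q1: "Q1 \<in> sets (lborel \<Otimes>\<^sub>M lborel)" unfolding Q1_def lborel_prod using Ab U01 by auto
  have e1: "{x\<in>{0..1}. (y, x) \<in> A} = Pair y -` Q1" for y unfolding Q1_def by auto
  define Q2 where "Q2 = (\<lambda>p. (snd p, fst p)) -` A \<inter> (UNIV \<times> {0..1::real})"
  have Q2: "Q2 \<in> sets (lborel \<Otimes>\<^sub>M lborel)" unfolding Q2_def lborel_prod
    using measurable_sets[OF swap_borel_meas Ab] U01 by auto
  have e2: "{x\<in>{0..1}. (x, y) \<in> A} = Pair y -` Q2" for y unfolding Q2_def by auto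
  have lb: "(\<lambda>t. t i) \<in> iid_uniform \<rightarrow>\<^sub>M lborel" for i using comp_meas by simp
  have m2: "(\<lambda>t. emeasure lborel {x\<in>{0..1}. (t i, x) \<in> A}) \<in> borel_measurable iid_uniform" for i
    unfolding e1 using measurable_compose[OF lb lborel_pair.measurable_emeasure_Pair1[OF Q1]] by simp
  have m3: "(\<lambda>t. emeasure lborel {x\<in>{0..1}. (x, t i) \<in> A}) \<in> borel_measurable iid_uniform" for i
    unfolding e2 using measurable_compose[OF lb lborel_pair.measurable_emeasure_Pair1[OF Q2]] by simp
  note [measurable] = m1 m2 m3
  show ?thesis unfolding gmu_def by measurable
qed

lemma ga_meas:
  assumes "grapheur_params E \<sigma> \<sigma>' \<theta> \<phi>"
  shows "grapheur_at E \<sigma> \<sigma>' \<theta> \<phi> \<in> iid_uniform \<rightarrow>\<^sub>M subprob_algebra sq_space"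
proof (rule measurable_subprob_algebra)
  fix t
  show "subprob_space (grapheur_at E \<sigma> \<sigma>' \<theta> \<phi> t)"
  proof (rule subprob_spaceI)
    show "emeasure (grapheur_at E \<sigma> \<sigma>' \<theta> \<phi> t) (space (grapheur_at E \<sigma> \<sigma>' \<theta> \<phi> t)) \<le> 1"
      using emeasure_ga[OF sets.top[of sq_space]] gmu_sub1[OF assms] by simp
    show "space (grapheur_at E \<sigma> \<sigma>' \<theta> \<phi> t) \<noteq> {}" by (simp add: space_sq)
  qed
  show "sets (grapheur_at E \<sigma> \<sigma>' \<theta> \<phi> t) = sets sq_space" by simp
next
  fix A assume "A \<in> sets sq_space"
  then show "(\<lambda>t. emeasure (grapheur_at E \<sigma> \<sigma>' \<theta> \<phi> t) A) \<in> borel_measurable iid_uniform"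
    using gmu_meas[of A E \<sigma> \<sigma>' \<theta> \<phi>] by (simp add: emeasure_ga)
qed

lemma U_prob: "prob_space (uniform_measure lborel {0..1::real})"
  by (rule prob_space_uniform_measure) auto

lemma iid_prob: "prob_space iid_uniform"
  unfolding iid_uniform_def by (rule prob_space_PiM) (rule U_prob)

lemma law_prob:
  assumes "grapheur_params E \<sigma> \<sigma>' \<theta> \<phi>"
  shows "prob_space (grapheur_law E \<sigma> \<sigma>' \<theta> \<phi>)"
  unfolding grapheur_law_def
  by (rule prob_space.prob_space_distr[OF iid_prob ga_meas[OF assms]])

lemma law_sets: "sets (grapheur_law E \<sigma> \<sigma>' \<theta> \<phi>) = sets (subprob_algebra sq_space)"
  unfolding grapheur_law_def by simp

lemma iid_ind:
  assumes B: "B \<in> sets borel"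
  shows "(\<integral>\<^sup>+t. indicator B (t i) \<partial>iid_uniform) \<le> emeasure lborel B"
proof -
  have d: "distr iid_uniform (uniform_measure lborel {0..1::real}) (\<lambda>t. t i) = uniform_measure lborel {0..1}"
    unfolding iid_uniform_def by (rule distr_PiM_component) (auto intro: U_prob)
  have "(\<integral>\<^sup>+t. indicator B (t i) \<partial>iid_uniform) = (\<integral>\<^sup>+x. indicator B x \<partial>distr iid_uniform (uniform_measure lborel {0..1::real}) (\<lambda>t. t i))"
    by (subst nn_integral_distr) (use B in \<open>auto simp: iid_uniform_def intro!: borel_measurable_indicator\<close>)
  also have "\<dots> = emeasure (uniform_measure lborel {0..1::real}) B" using B by (simp add: d)
  also have "\<dots> = emeasure lborel ({0..1} \<inter> B)" using B by (simp add: emeasure_uniform_measure divide_ennreal_def)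
  also have "\<dots> \<le> emeasure lborel B" using B by (intro emeasure_mono) auto
  finally show ?thesis .
qed


lemma int_bound:
  assumes P: "grapheur_params E \<sigma> \<sigma>' \<theta> \<phi>"
    and gi: "\<And>t. gmu E \<sigma> \<sigma>' \<theta> \<phi> t A \<le> (\<Sum>i. \<Sum>j. ennreal (E i j) * f i j t)
      + (\<Sum>i. ennreal (\<sigma> i) * g i t + ennreal (\<sigma>' i) * g' i t) + ennreal \<theta> * c + ennreal \<phi> * c"
    and fm: "\<And>i j. f i j \<in> borel_measurable iid_uniform"
    and gm: "\<And>i. g i \<in> borel_measurable iid_uniform"
    and gm': "\<And>i. g' i \<in> borel_measurable iid_uniform"
    and fi: "\<And>i j. (\<integral>\<^sup>+t. f i j t \<partial>iid_uniform) \<le> c"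
    and gi1: "\<And>i. (\<integral>\<^sup>+t. g i t \<partial>iid_uniform) \<le> c"
    and gi2: "\<And>i. (\<integral>\<^sup>+t. g' i t \<partial>iid_uniform) \<le> c"
  shows "(\<integral>\<^sup>+t. gmu E \<sigma> \<sigma>' \<theta> \<phi> t A \<partial>iid_uniform) \<le> c"
proof -
  interpret prob_space iid_uniform by (rule iid_prob)
  note [measurable] = fm gm gm'
  have "(\<integral>\<^sup>+t. gmu E \<sigma> \<sigma>' \<theta> \<phi> t A \<partial>iid_uniform) \<le> (\<integral>\<^sup>+t. (\<Sum>i. \<Sum>j. ennreal (E i j) * f i j t)
      + (\<Sum>i. ennreal (\<sigma> i) * g i t + ennreal (\<sigma>' i) * g' i t) + (ennreal \<theta> * c + ennreal \<phi> * c) \<partial>iid_uniform)"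
    by (rule nn_integral_mono) (use gi in \<open>simp add: add.assoc\<close>)
  also have "\<dots> = (\<integral>\<^sup>+t. (\<Sum>i. \<Sum>j. ennreal (E i j) * f i j t) \<partial>iid_uniform)
      + (\<integral>\<^sup>+t. (\<Sum>i. ennreal (\<sigma> i) * g i t + ennreal (\<sigma>' i) * g' i t) \<partial>iid_uniform) + (ennreal \<theta> * c + ennreal \<phi> * c)"
    by (subst nn_integral_add, measurable, subst nn_integral_add, measurable) (simp add: emeasure_space_1)
  also have "(\<integral>\<^sup>+t. (\<Sum>i. \<Sum>j. ennreal (E i j) * f i j t) \<partial>iid_uniform) = (\<Sum>i. \<Sum>j. ennreal (E i j) * (\<integral>\<^sup>+t. f i j t \<partial>iid_uniform))"
    by (subst nn_integral_suminf, measurable, subst nn_integral_suminf, measurable)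
       (simp add: nn_integral_cmult)
  also have "(\<integral>\<^sup>+t. (\<Sum>i. ennreal (\<sigma> i) * g i t + ennreal (\<sigma>' i) * g' i t) \<partial>iid_uniform)
      = (\<Sum>i. ennreal (\<sigma> i) * (\<integral>\<^sup>+t. g i t \<partial>iid_uniform) + ennreal (\<sigma>' i) * (\<integral>\<^sup>+t. g' i t \<partial>iid_uniform))"
    by (subst nn_integral_suminf, measurable, subst nn_integral_add, measurable)
       (simp add: nn_integral_cmult)
  also have "(\<Sum>i. \<Sum>j. ennreal (E i j) * (\<integral>\<^sup>+t. f i j t \<partial>iid_uniform))
      + (\<Sum>i. ennreal (\<sigma> i) * (\<integral>\<^sup>+t. g i t \<partial>iid_uniform) + ennreal (\<sigma>' i) * (\<integral>\<^sup>+t. g' i t \<partial>iid_uniform))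
      + (ennreal \<theta> * c + ennreal \<phi> * c)
     \<le> (\<Sum>i. \<Sum>j. ennreal (E i j) * c) + (\<Sum>i. ennreal (\<sigma> i) * c + ennreal (\<sigma>' i) * c) + (ennreal \<theta> * c + ennreal \<phi> * c)"
    by (intro add_mono suminf_le summableI mult_left_mono fi gi1 gi2 allI order.refl) auto
  also have "\<dots> = ((\<Sum>i. \<Sum>j. ennreal (E i j)) + (\<Sum>i. ennreal (\<sigma> i) + ennreal (\<sigma>' i)) + ennreal \<theta> + ennreal \<phi>) * c"
  proof -
    have eq: "ennreal (\<sigma> i) * c + ennreal (\<sigma>' i) * c = (ennreal (\<sigma> i) + ennreal (\<sigma>' i)) * c" for i
      by (simp add: distrib_right)
    have "(\<Sum>i. \<Sum>j. ennreal (E i j) * c) + (\<Sum>i. ennreal (\<sigma> i) * c + ennreal (\<sigma>' i) * c) + (ennreal \<theta> * c + ennreal \<phi> * c)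
       = (\<Sum>i. \<Sum>j. ennreal (E i j)) * c + (\<Sum>i. ennreal (\<sigma> i) + ennreal (\<sigma>' i)) * c + (ennreal \<theta> * c + ennreal \<phi> * c)"
      by (simp only: eq ennreal_suminf_multc)
    also have "\<dots> = ((\<Sum>i. \<Sum>j. ennreal (E i j)) + (\<Sum>i. ennreal (\<sigma> i) + ennreal (\<sigma>' i)) + ennreal \<theta> + ennreal \<phi>) * c"
      by (simp only: distrib_right add.assoc)
    finally show ?thesis .
  qed
  also have "\<dots> = c" using params_total[OF P] by simp
  finally show ?thesis .
qed

lemma l01[simp]: "emeasure lborel {x::real. 0 \<le> x \<and> x \<le> 1} = 1"
proof -
  have "{x::real. 0 \<le> x \<and> x \<le> 1} = {0..1}" by auto
  then show ?thesis by simp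
qed

lemma gmu_row:
  assumes B: "B \<in> sets borel"
  shows "gmu E \<sigma> \<sigma>' \<theta> \<phi> t (B \<times> {0..1::real}) \<le> (\<Sum>i. \<Sum>j. ennreal (E i j) * indicator B (t i))
    + (\<Sum>i. ennreal (\<sigma> i) * indicator B (t i) + ennreal (\<sigma>' i) * emeasure lborel B)
    + ennreal \<theta> * emeasure lborel B + ennreal \<phi> * emeasure lborel B"
proof (rule gmu_le)
  show "indicator (B \<times> {0..1::real}) (t i, t j) \<le> (indicator B (t i) :: ennreal)" for i j
    by (auto simp: indicator_def)
  show "emeasure lborel {x\<in>{0..1::real}. (t i, x) \<in> B \<times> {0..1::real}} \<le> indicator B (t i)" for i
  proof -
    have "{x\<in>{0..1::real}. (t i, x) \<in> B \<times> {0..1::real}} = (if t i \<in> B then {0..1::real} else {})" by auto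
    show ?thesis unfolding \<open>_ = (if t i \<in> B then {0..1::real} else {})\<close> using emeasure_lborel_Icc[of "0::real" 1] by (simp add: indicator_def)
  qed
  show "emeasure lborel {x\<in>{0..1::real}. (x, t i) \<in> B \<times> {0..1::real}} \<le> emeasure lborel B" for i
    using B by (intro emeasure_mono) auto
  show "emeasure lborel {x\<in>{0..1::real}. (x, x) \<in> B \<times> {0..1::real}} \<le> emeasure lborel B"
    using B by (intro emeasure_mono) auto
  have "emeasure (lborel \<Otimes>\<^sub>M lborel) ((B \<times> {0..1::real}) \<inter> ({0..1::real} \<times> {0..1::real})) \<le> emeasure (lborel \<Otimes>\<^sub>M lborel) (B \<times> {0..1::real})"
    using B by (intro emeasure_mono) auto
  also have "\<dots> = emeasure lborel B" using B by (simp add: lborel.emeasure_pair_measure_Times)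
  finally show "emeasure (lborel \<Otimes>\<^sub>M lborel) ((B \<times> {0..1::real}) \<inter> ({0..1::real} \<times> {0..1::real})) \<le> emeasure lborel B" .
qed

lemma gmu_col:
  assumes B: "B \<in> sets borel"
  shows "gmu E \<sigma> \<sigma>' \<theta> \<phi> t ({0..1::real} \<times> B) \<le> (\<Sum>i. \<Sum>j. ennreal (E i j) * indicator B (t j))
    + (\<Sum>i. ennreal (\<sigma> i) * emeasure lborel B + ennreal (\<sigma>' i) * indicator B (t i))
    + ennreal \<theta> * emeasure lborel B + ennreal \<phi> * emeasure lborel B"
proof (rule gmu_le)
  show "indicator ({0..1::real} \<times> B) (t i, t j) \<le> (indicator B (t j) :: ennreal)" for i j
    by (auto simp: indicator_def)
  show "emeasure lborel {x\<in>{0..1::real}. (x, t i) \<in> {0..1::real} \<times> B} \<le> indicator B (t i)" for i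
  proof -
    have "{x\<in>{0..1::real}. (x, t i) \<in> {0..1::real} \<times> B} = (if t i \<in> B then {0..1::real} else {})" by auto
    show ?thesis unfolding \<open>_ = (if t i \<in> B then {0..1::real} else {})\<close> using emeasure_lborel_Icc[of "0::real" 1] by (simp add: indicator_def)
  qed
  show "emeasure lborel {x\<in>{0..1::real}. (t i, x) \<in> {0..1::real} \<times> B} \<le> emeasure lborel B" for i
    using B by (intro emeasure_mono) auto
  show "emeasure lborel {x\<in>{0..1::real}. (x, x) \<in> {0..1::real} \<times> B} \<le> emeasure lborel B"
    using B by (intro emeasure_mono) auto
  have "emeasure (lborel \<Otimes>\<^sub>M lborel) (({0..1::real} \<times> B) \<inter> ({0..1::real} \<times> {0..1::real})) \<le> emeasure (lborel \<Otimes>\<^sub>M lborel) ({0..1::real} \<times> B)"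
    using B by (intro emeasure_mono) auto
  also have "\<dots> = emeasure lborel B" using B by (simp add: lborel.emeasure_pair_measure_Times)
  finally show "emeasure (lborel \<Otimes>\<^sub>M lborel) (({0..1::real} \<times> B) \<inter> ({0..1::real} \<times> {0..1::real})) \<le> emeasure lborel B" .
qed


lemma ind_comp_meas: "B \<in> sets borel \<Longrightarrow> (\<lambda>t. indicator B (t i) :: ennreal) \<in> borel_measurable iid_uniform"
  using measurable_compose[OF comp_meas[of i] borel_measurable_indicator[of B borel]] by (simp add: comp_def)

lemma iid_const: "(\<integral>\<^sup>+t. c \<partial>iid_uniform) = c"
  using prob_space.emeasure_space_1[OF iid_prob] by simp

lemma times_borel: "A \<in> sets borel \<Longrightarrow> C \<in> sets borel \<Longrightarrow> A \<times> C \<in> sets (borel :: (real\<times>real) measure)"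
proof -
  assume "A \<in> sets borel" "C \<in> sets borel"
  then have "A \<times> C \<in> sets (borel \<Otimes>\<^sub>M (borel::real measure))" by (intro pair_measureI) auto
  then show ?thesis by (simp only: borel_prod)
qed

lemma strip_bounds:
  assumes P: "grapheur_params E \<sigma> \<sigma>' \<theta> \<phi>" and B: "B \<in> sets borel" "B \<subseteq> {0..1}"
  shows "(\<integral>\<^sup>+m. emeasure m (B \<times> {0..1}) \<partial>grapheur_law E \<sigma> \<sigma>' \<theta> \<phi>) \<le> emeasure lborel B"
    "(\<integral>\<^sup>+m. emeasure m ({0..1} \<times> B) \<partial>grapheur_law E \<sigma> \<sigma>' \<theta> \<phi>) \<le> emeasure lborel B"
proof -
  have s1: "B \<times> {0..1} \<in> sets sq_space" using B by (auto simp: sets_sq intro!: times_borel)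
  have s2: "{0..1} \<times> B \<in> sets sq_space" using B by (auto simp: sets_sq intro!: times_borel)
  have "(\<integral>\<^sup>+m. emeasure m (B \<times> {0..1}) \<partial>grapheur_law E \<sigma> \<sigma>' \<theta> \<phi>) = (\<integral>\<^sup>+t. emeasure (grapheur_at E \<sigma> \<sigma>' \<theta> \<phi> t) (B \<times> {0..1}) \<partial>iid_uniform)"
    unfolding grapheur_law_def
    by (subst nn_integral_distr[OF ga_meas[OF P]]) (simp_all add: measurable_emeasure_subprob_algebra[OF s1])
  also have "\<dots> = (\<integral>\<^sup>+t. gmu E \<sigma> \<sigma>' \<theta> \<phi> t (B \<times> {0..1}) \<partial>iid_uniform)"
    by (simp add: emeasure_ga[OF s1])
  also have "\<dots> \<le> emeasure lborel B"
    by (rule int_bound[OF P gmu_row[OF B(1)]])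
       (auto simp: iid_const iid_ind B ind_comp_meas prob_space.emeasure_space_1[OF iid_prob])
  finally show "(\<integral>\<^sup>+m. emeasure m (B \<times> {0..1}) \<partial>grapheur_law E \<sigma> \<sigma>' \<theta> \<phi>) \<le> emeasure lborel B" .
  have "(\<integral>\<^sup>+m. emeasure m ({0..1} \<times> B) \<partial>grapheur_law E \<sigma> \<sigma>' \<theta> \<phi>) = (\<integral>\<^sup>+t. emeasure (grapheur_at E \<sigma> \<sigma>' \<theta> \<phi> t) ({0..1} \<times> B) \<partial>iid_uniform)"
    unfolding grapheur_law_def
    by (subst nn_integral_distr[OF ga_meas[OF P]]) (simp_all add: measurable_emeasure_subprob_algebra[OF s2])
  also have "\<dots> = (\<integral>\<^sup>+t. gmu E \<sigma> \<sigma>' \<theta> \<phi> t ({0..1} \<times> B) \<partial>iid_uniform)"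
    by (simp add: emeasure_ga[OF s2])
  also have "\<dots> \<le> emeasure lborel B"
    by (rule int_bound[OF P gmu_col[OF B(1)]])
       (auto simp: iid_const iid_ind B ind_comp_meas prob_space.emeasure_space_1[OF iid_prob])
  finally show "(\<integral>\<^sup>+m. emeasure m ({0..1} \<times> B) \<partial>grapheur_law E \<sigma> \<sigma>' \<theta> \<phi>) \<le> emeasure lborel B" .
qed

lemma grapheur_props:
  assumes "M \<in> grapheurs"
  shows "prob_space M" "sets M = sets (subprob_algebra sq_space)"
    "\<And>B. B \<in> sets borel \<Longrightarrow> B \<subseteq> {0..1} \<Longrightarrow> (\<integral>\<^sup>+m. emeasure m (B \<times> {0..1}) \<partial>M) \<le> emeasure lborel B"
    "\<And>B. B \<in> sets borel \<Longrightarrow> B \<subseteq> {0..1} \<Longrightarrow> (\<integral>\<^sup>+m. emeasure m ({0..1} \<times> B) \<partial>M) \<le> emeasure lborel B"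
  using assms law_prob law_sets strip_bounds unfolding grapheurs_def by auto


abbreviation "SP \<equiv> subprob_algebra sq_space"

definition Gv :: "nat \<Rightarrow> (real \<times> real) measure \<Rightarrow> nat \<times> nat \<Rightarrow> real" where
  "Gv k m ij = measure m (I_int k (fst ij) \<times> I_int k (snd ij))"

definition Gf :: "nat \<Rightarrow> (real \<times> real) measure \<Rightarrow> nat \<times> nat \<Rightarrow> real" where
  "Gf k m = (\<lambda>ij\<in>{..<k}\<times>{..<k}. Gv k m ij)"

lemma G_law_alt: "G_law k M = distr M (mat_space k) (Gf k)"
  unfolding G_law_def Gf_def Gv_def ..

lemma I_int_sub: assumes "k \<ge> 1" "i < k" shows "I_int k i \<subseteq> {0..1}"
proof
  fix x assume "x \<in> I_int k i"
  then have x: "real i / real k \<le> x" "x < real (Suc i) / real k" by (auto simp: I_int_def)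
  have k0: "0 < real k" using assms by simp
  have "real (Suc i) \<le> real k" using assms by simp
  then have a: "real (Suc i) / real k \<le> 1" using k0 by (simp add: pos_divide_le_eq)
  have b: "0 \<le> real i / real k" by simp
  have "0 \<le> x" using x(1) b by linarith
  moreover have "x \<le> 1" using x(2) a by linarith
  ultimately show "x \<in> {0..1}" by simp
qed

lemma I_int_borel: "I_int k i \<in> sets borel"
  by (simp add: I_int_def)

lemma I_int_interval: "is_interval (I_int k i)"
  by (simp add: I_int_def is_interval_co)

lemma rect_sq: "k \<ge> 1 \<Longrightarrow> i < k \<Longrightarrow> j < k \<Longrightarrow> I_int k i \<times> I_int k j \<in> sets sq_space"
  using I_int_sub[of k i] I_int_sub[of k j] by (auto simp: sets_sq intro!: times_borel I_int_borel)

lemma measure_SP_meas: "A \<in> sets sq_space \<Longrightarrow> (\<lambda>m. measure m A) \<in> borel_measurable SP"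
  unfolding measure_def
  by (intro borel_measurable_enn2real measurable_emeasure_subprob_algebra)

lemma Gv_meas: "k \<ge> 1 \<Longrightarrow> ij \<in> {..<k}\<times>{..<k} \<Longrightarrow> (\<lambda>m. Gv k m ij) \<in> borel_measurable SP"
  unfolding Gv_def by (rule measure_SP_meas) (auto intro!: rect_sq)

lemma Gf_meas: "k \<ge> 1 \<Longrightarrow> Gf k \<in> SP \<rightarrow>\<^sub>M mat_space k"
  unfolding Gf_def mat_space_def
  by (rule measurable_restrict) (rule Gv_meas)

lemma space_SP: "m \<in> space SP \<longleftrightarrow> subprob_space m \<and> sets m = sets sq_space"
  by (simp add: space_subprob_algebra)

lemma Gv_bounds: "m \<in> space SP \<Longrightarrow> 0 \<le> Gv k m ij \<and> Gv k m ij \<le> 1"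
  unfolding Gv_def space_SP by (auto intro: subprob_space.subprob_measure_le_1)

lemma mult_le_INF:
  fixes c W :: ennreal
  assumes c: "c \<noteq> 0" "c \<noteq> top" and le: "\<And>x. x \<in> A \<Longrightarrow> W \<le> c * f x"
  shows "W \<le> c * (INF x\<in>A. f x)"
proof -
  have "W / c \<le> f x" if "x \<in> A" for x
  proof -
    have "W / c \<le> (f x * c) / c" using le[OF that] by (intro divide_right_mono_ennreal) (simp add: mult.commute)
    also have "\<dots> = f x" using c by (simp add: ennreal_mult_divide_eq)
    finally show ?thesis .
  qed
  then have "W / c \<le> (INF x\<in>A. f x)" by (intro INF_greatest)
  then have "(W / c) * c \<le> (INF x\<in>A. f x) * c" by (intro mult_right_mono) auto
  moreover have "(W / c) * c = W"
  proof -
    have "c / c = 1" using c by (simp add: divide_eq_1_ennreal)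
    then show ?thesis by (simp add: ennreal_divide_times)
  qed
  ultimately show ?thesis by (simp add: mult.commute)
qed

lemma coupling_facts:
  assumes "C \<in> couplings M N"
  shows "prob_space C" "sets C = sets (M \<Otimes>\<^sub>M N)" "distr C M fst = M" "distr C N snd = N"
    "fst \<in> C \<rightarrow>\<^sub>M M" "snd \<in> C \<rightarrow>\<^sub>M N"
proof -
  show "prob_space C" "sets C = sets (M \<Otimes>\<^sub>M N)" "distr C M fst = M" "distr C N snd = N"
    using assms by (auto simp: couplings_def)
  then show "fst \<in> C \<rightarrow>\<^sub>M M" "snd \<in> C \<rightarrow>\<^sub>M N"
    using measurable_cong_sets[of C "M \<Otimes>\<^sub>M N" M M] measurable_cong_sets[of C "M \<Otimes>\<^sub>M N" N N] by auto
qed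


definition Adm :: "(real set \<times> real set) set" where
  "Adm = {(S,T). is_interval S \<and> S \<subseteq> {0..1} \<and> is_interval T \<and> T \<subseteq> {0..1::real}}"

definition boxcost :: "((real \<times> real) measure \<times> (real \<times> real) measure) measure \<Rightarrow> ennreal" where
  "boxcost C = (\<Squnion>(S,T) \<in> Adm. \<integral>\<^sup>+ mm. ennreal \<bar>measure (fst mm) (S \<times> T) - measure (snd mm) (S \<times> T)\<bar> \<partial>C)"

lemma W_box_alt: "W_box M N = (INF C \<in> couplings M N. boxcost C)"
  unfolding W_box_def boxcost_def Adm_def ..

definition matcost :: "nat \<Rightarrow> ((nat \<times> nat \<Rightarrow> real) \<times> (nat \<times> nat \<Rightarrow> real)) measure \<Rightarrow> ennreal" where
  "matcost k C = (\<integral>\<^sup>+ XY. ennreal (\<Sum>ij \<in> {..<k} \<times> {..<k}. \<bar>fst XY ij - snd XY ij\<bar>) \<partial>C)"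

lemma W_1_alt: "W_1 k P Q = (INF C \<in> couplings P Q. matcost k C)"
  unfolding W_1_def matcost_def ..

lemma matcost_integrand_meas:
  "(\<lambda>XY. ennreal (\<Sum>ij \<in> {..<k} \<times> {..<k}. \<bar>fst XY ij - snd XY ij\<bar>)) \<in> borel_measurable (mat_space k \<Otimes>\<^sub>M mat_space k)"
proof -
  have c: "(\<lambda>X. X ij) \<in> mat_space k \<rightarrow>\<^sub>M borel" if "ij \<in> {..<k} \<times> {..<k}" for ij
    unfolding mat_space_def using that by (rule measurable_component_singleton)
  have "(\<lambda>XY. (\<Sum>ij \<in> {..<k} \<times> {..<k}. \<bar>fst XY ij - snd XY ij\<bar>)) \<in> borel_measurable (mat_space k \<Otimes>\<^sub>M mat_space k)"
  proof (rule borel_measurable_sum)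
    fix ij assume "ij \<in> {..<k} \<times> {..<k}"
    note [measurable] = c[OF this]
    show "(\<lambda>XY. \<bar>fst XY ij - snd XY ij\<bar>) \<in> borel_measurable (mat_space k \<Otimes>\<^sub>M mat_space k)"
      by measurable
  qed
  then show ?thesis by measurable
qed

lemma push_coupling:
  assumes C: "C \<in> couplings M N" and sM: "sets M = sets SP" and sN: "sets N = sets SP" and k: "k \<ge> 1"
  shows "distr C (mat_space k \<Otimes>\<^sub>M mat_space k) (\<lambda>p. (Gf k (fst p), Gf k (snd p))) \<in> couplings (G_law k M) (G_law k N)"
    (is "?C' \<in> _")
proof -
  note CF = coupling_facts[OF C]
  have GM: "Gf k \<in> M \<rightarrow>\<^sub>M mat_space k" using Gf_meas[OF k] by (simp add: measurable_cong_sets[OF sM refl])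
  have GN: "Gf k \<in> N \<rightarrow>\<^sub>M mat_space k" using Gf_meas[OF k] by (simp add: measurable_cong_sets[OF sN refl])
  have GG: "(\<lambda>p. (Gf k (fst p), Gf k (snd p))) \<in> C \<rightarrow>\<^sub>M (mat_space k \<Otimes>\<^sub>M mat_space k)"
    using measurable_compose[OF CF(5) GM] measurable_compose[OF CF(6) GN]
    by (intro measurable_Pair) (auto simp: comp_def)
  have sGM: "sets (G_law k M) = sets (mat_space k)" "sets (G_law k N) = sets (mat_space k)"
    by (simp_all add: G_law_alt)
  have f1: "fst \<in> (mat_space k \<Otimes>\<^sub>M mat_space k) \<rightarrow>\<^sub>M G_law k M"
    by (simp add: measurable_cong_sets[OF refl sGM(1)])
  have f2: "snd \<in> (mat_space k \<Otimes>\<^sub>M mat_space k) \<rightarrow>\<^sub>M G_law k N"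
    by (simp add: measurable_cong_sets[OF refl sGM(2)])
  have GM': "Gf k \<in> M \<rightarrow>\<^sub>M G_law k M" using GM by (simp add: measurable_cong_sets[OF refl sGM(1)])
  have GN': "Gf k \<in> N \<rightarrow>\<^sub>M G_law k N" using GN by (simp add: measurable_cong_sets[OF refl sGM(2)])
  have "distr ?C' (G_law k M) fst = distr C (G_law k M) (fst \<circ> (\<lambda>p. (Gf k (fst p), Gf k (snd p))))"
    by (rule distr_distr[OF f1 GG])
  also have "\<dots> = distr C (G_law k M) (Gf k \<circ> fst)" by (simp add: comp_def)
  also have "\<dots> = distr (distr C M fst) (G_law k M) (Gf k)"
    by (rule distr_distr[OF GM' CF(5), symmetric])
  also have "\<dots> = distr M (mat_space k) (Gf k)" unfolding CF(3) by (rule distr_cong) (simp_all add: sGM)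
  also have "\<dots> = G_law k M" by (simp add: G_law_alt)
  finally have m1: "distr ?C' (G_law k M) fst = G_law k M" .
  have "distr ?C' (G_law k N) snd = distr C (G_law k N) (snd \<circ> (\<lambda>p. (Gf k (fst p), Gf k (snd p))))"
    by (rule distr_distr[OF f2 GG])
  also have "\<dots> = distr C (G_law k N) (Gf k \<circ> snd)" by (simp add: comp_def)
  also have "\<dots> = distr (distr C N snd) (G_law k N) (Gf k)"
    by (rule distr_distr[OF GN' CF(6), symmetric])
  also have "\<dots> = distr N (mat_space k) (Gf k)" unfolding CF(4) by (rule distr_cong) (simp_all add: sGM)
  also have "\<dots> = G_law k N" by (simp add: G_law_alt)
  finally have m2: "distr ?C' (G_law k N) snd = G_law k N" .
  have "prob_space ?C'" by (rule prob_space.prob_space_distr[OF CF(1) GG])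
  moreover have "sets ?C' = sets (G_law k M \<Otimes>\<^sub>M G_law k N)"
    by (simp add: sets_pair_measure_cong[OF sGM])
  ultimately show ?thesis using m1 m2 unfolding couplings_def by simp
qed

lemma first_ineq:
  assumes sM: "sets M = sets SP" and sN: "sets N = sets SP" and k: "k \<ge> 1"
  shows "W_1 k (G_law k M) (G_law k N) \<le> of_nat (k^2) * W_box M N"
  unfolding W_box_alt
proof (rule mult_le_INF)
  show "of_nat (k^2) \<noteq> (0::ennreal)" using k by simp
  show "of_nat (k^2) \<noteq> (top::ennreal)" by (rule ennreal_of_nat_neq_top)
  fix C assume C: "C \<in> couplings M N"
  note CF = coupling_facts[OF C]
  let ?K = "{..<k} \<times> {..<k}"
  let ?GG = "\<lambda>p. (Gf k (fst p), Gf k (snd p))"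
  have GM: "Gf k \<in> M \<rightarrow>\<^sub>M mat_space k" using Gf_meas[OF k] by (simp add: measurable_cong_sets[OF sM refl])
  have GN: "Gf k \<in> N \<rightarrow>\<^sub>M mat_space k" using Gf_meas[OF k] by (simp add: measurable_cong_sets[OF sN refl])
  have GG: "?GG \<in> C \<rightarrow>\<^sub>M (mat_space k \<Otimes>\<^sub>M mat_space k)"
    using measurable_compose[OF CF(5) GM] measurable_compose[OF CF(6) GN]
    by (intro measurable_Pair) (auto simp: comp_def)
  have fS: "fst \<in> C \<rightarrow>\<^sub>M SP" using CF(5) by (simp add: measurable_cong_sets[OF refl sM])
  have sS: "snd \<in> C \<rightarrow>\<^sub>M SP" using CF(6) by (simp add: measurable_cong_sets[OF refl sN])
  have "W_1 k (G_law k M) (G_law k N) \<le> matcost k (distr C (mat_space k \<Otimes>\<^sub>M mat_space k) ?GG)"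
    unfolding W_1_alt by (rule INF_lower) (rule push_coupling[OF C sM sN k])
  also have "\<dots> = (\<integral>\<^sup>+p. ennreal (\<Sum>ij \<in> ?K. \<bar>Gf k (fst p) ij - Gf k (snd p) ij\<bar>) \<partial>C)"
    unfolding matcost_def by (subst nn_integral_distr[OF GG]) (simp_all add: matcost_integrand_meas)
  also have "\<dots> = (\<integral>\<^sup>+p. (\<Sum>ij \<in> ?K. ennreal \<bar>Gv k (fst p) ij - Gv k (snd p) ij\<bar>) \<partial>C)"
    by (intro nn_integral_cong) (simp add: Gf_def sum_ennreal)
  also have "\<dots> = (\<Sum>ij \<in> ?K. \<integral>\<^sup>+p. ennreal \<bar>Gv k (fst p) ij - Gv k (snd p) ij\<bar> \<partial>C)"
  proof (rule nn_integral_sum)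
    fix ij assume ij: "ij \<in> ?K"
    note [measurable] = measurable_compose[OF fS Gv_meas[OF k ij]] measurable_compose[OF sS Gv_meas[OF k ij]]
    show "(\<lambda>p. ennreal \<bar>Gv k (fst p) ij - Gv k (snd p) ij\<bar>) \<in> borel_measurable C"
      by (simp add: comp_def)
  qed
  also have "\<dots> \<le> (\<Sum>ij \<in> ?K. boxcost C)"
  proof (rule sum_mono)
    fix ij assume ij: "ij \<in> ?K"
    let ?S = "I_int k (fst ij)" and ?T = "I_int k (snd ij)"
    have s1: "?S \<subseteq> {0..1}" using ij by (intro I_int_sub[OF k]) auto
    have s2: "?T \<subseteq> {0..1}" using ij by (intro I_int_sub[OF k]) auto
    have adm: "(?S, ?T) \<in> Adm" unfolding Adm_def using s1 s2 I_int_interval by blast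
    have "(\<lambda>(S,T). \<integral>\<^sup>+ mm. ennreal \<bar>measure (fst mm) (S \<times> T) - measure (snd mm) (S \<times> T)\<bar> \<partial>C) (?S, ?T) \<le> boxcost C"
      unfolding boxcost_def by (rule SUP_upper[OF adm])
    then show "(\<integral>\<^sup>+p. ennreal \<bar>Gv k (fst p) ij - Gv k (snd p) ij\<bar> \<partial>C) \<le> boxcost C"
      by (simp add: Gv_def)
  qed
  also have "\<dots> = of_nat (k^2) * boxcost C" by (simp add: power2_eq_square)
  finally show "W_1 k (G_law k M) (G_law k N) \<le> of_nat (k^2) * boxcost C" .
qed


lemma interval_ab:
  fixes S :: "real set"
  assumes "is_interval S" "S \<subseteq> {0..1}"
  shows "\<exists>a b. 0 \<le> a \<and> a \<le> b \<and> b \<le> 1 \<and> {a<..<b} \<subseteq> S \<and> S \<subseteq> {a..b}"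
proof (cases "S = {}")
  case True then show ?thesis by (intro exI[of _ 0]) auto
next
  case False
  have bb: "bdd_below S" "bdd_above S" using assms(2) by (auto intro!: bdd_belowI[of _ 0] bdd_aboveI[of _ 1])
  define a where "a = Inf S"
  define b where "b = Sup S"
  have lo: "a \<le> x" "x \<le> b" if "x \<in> S" for x
    using that bb unfolding a_def b_def by (auto intro: cInf_lower cSup_upper)
  obtain x0 where x0: "x0 \<in> S" using False by auto
  have a0: "0 \<le> a" unfolding a_def using False assms(2) by (intro cInf_greatest) auto
  have b1: "b \<le> 1" unfolding b_def using False assms(2) by (intro cSup_least) auto
  have ab: "a \<le> b" using lo[OF x0] by simp
  have "{a<..<b} \<subseteq> S"
  proof
    fix y assume y: "y \<in> {a<..<b}"
    obtain x1 where x1: "x1 \<in> S" "x1 < y" using y False bb(1) unfolding a_def by (auto simp: cInf_less_iff)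
    obtain x2 where x2: "x2 \<in> S" "y < x2" using y False bb(2) unfolding b_def by (auto simp: less_cSup_iff)
    show "y \<in> S" using assms(1) x1 x2 unfolding is_interval_1 by (meson less_imp_le)
  qed
  moreover have "S \<subseteq> {a..b}" using lo by auto
  ultimately show ?thesis using a0 b1 ab by blast
qed

lemma round_data:
  assumes k: "k \<ge> 1" and a: "0 \<le> a" "a \<le> 1"
  shows "nat (round (real k * a)) \<le> k" "\<bar>a - real (nat (round (real k * a))) / real k\<bar> \<le> 1 / (2 * real k)"
proof -
  have r: "\<bar>of_int (round (real k * a)) - real k * a\<bar> \<le> 1/2" by (rule of_int_round_abs_le)
  have ka: "0 \<le> real k * a" "real k * a \<le> real k" using a k by (auto simp: mult_left_le)
  have "of_int (round (real k * a)) > (-1::real)" using r ka by linarith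
  then have r0: "round (real k * a) \<ge> 0" by linarith
  have "of_int (round (real k * a)) < real k + 1" using r ka by linarith
  then have "round (real k * a) < int k + 1" by linarith
  then show "nat (round (real k * a)) \<le> k" by linarith
  have e: "real (nat (round (real k * a))) = of_int (round (real k * a))" using r0 by simp
  have k0: "0 < real k" using k by simp
  have "\<bar>a - real (nat (round (real k * a))) / real k\<bar> = \<bar>real k * a - of_int (round (real k * a))\<bar> / real k"
    unfolding e using k0 by (simp add: field_simps abs_div_pos[symmetric])
  also have "\<dots> \<le> (1/2) / real k" using r k0 by (intro divide_right_mono) (auto simp: abs_minus_commute)
  finally show "\<bar>a - real (nat (round (real k * a))) / real k\<bar> \<le> 1 / (2 * real k)" by simp
qed

lemma mem_Iunion:
  assumes k: "k \<ge> 1"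
  shows "x \<in> (\<Union>i\<in>{p..<q}. I_int k i) \<longleftrightarrow> real p / real k \<le> x \<and> x < real q / real k"
proof
  have k0: "0 < real k" using k by simp
  assume "x \<in> (\<Union>i\<in>{p..<q}. I_int k i)"
  then obtain i where i: "p \<le> i" "i < q" "real i / real k \<le> x" "x < real (Suc i) / real k"
    by (auto simp: I_int_def)
  have "real p / real k \<le> real i / real k" using i k0 by (intro divide_right_mono) auto
  moreover have "real (Suc i) / real k \<le> real q / real k" using i k0 by (intro divide_right_mono) auto
  ultimately show "real p / real k \<le> x \<and> x < real q / real k" using i by linarith
next
  have k0: "0 < real k" using k by simp
  assume x: "real p / real k \<le> x \<and> x < real q / real k"
  then have kx: "real p \<le> real k * x" "real k * x < real q" using k0 by (auto simp: field_simps)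
  define i where "i = nat \<lfloor>real k * x\<rfloor>"
  have f0: "0 \<le> \<lfloor>real k * x\<rfloor>" using kx by simp
  have fp: "int p \<le> \<lfloor>real k * x\<rfloor>" using kx by (simp add: le_floor_iff)
  have fq: "\<lfloor>real k * x\<rfloor> < int q" using kx by (simp add: floor_less_iff)
  have ie: "real i = of_int \<lfloor>real k * x\<rfloor>" unfolding i_def using f0 by simp
  have "p \<le> i" "i < q" using fp fq f0 unfolding i_def by linarith+
  moreover have "real i \<le> real k * x" unfolding ie by simp
  then have "real i / real k \<le> x" using k0 by (simp add: field_simps)
  moreover have "real k * x < real i + 1" unfolding ie by linarith
  then have "x < real (Suc i) / real k" using k0 by (simp add: field_simps)
  ultimately show "x \<in> (\<Union>i\<in>{p..<q}. I_int k i)" by (auto simp: I_int_def)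
qed

lemma I_int_disj:
  assumes k: "k \<ge> 1" and "i \<noteq> j"
  shows "I_int k i \<inter> I_int k j = {}"
proof -
  have k0: "0 < real k" using k by simp
  have fl: "\<lfloor>real k * x\<rfloor> = int i'" if "x \<in> I_int k i'" for x i'
  proof -
    have "real i' \<le> real k * x" "real k * x < real i' + 1" using that k0 by (auto simp: I_int_def field_simps)
    then show ?thesis by (simp add: floor_eq_iff)
  qed
  show ?thesis
  proof (rule ccontr)
    assume "I_int k i \<inter> I_int k j \<noteq> {}"
    then obtain x where "x \<in> I_int k i" "x \<in> I_int k j" by auto
    then have "int i = int j" using fl by metis
    then show False using assms(2) by simp
  qed
qed


lemma approx_1d:
  fixes S :: "real set"
  assumes k: "k \<ge> 1" and S: "is_interval S" "S \<subseteq> {0..1}"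
  obtains p q e where "q \<le> k" "e \<in> sets borel" "e \<subseteq> {0..1}" "emeasure lborel e \<le> ennreal (1 / real k)"
    "S - (\<Union>i\<in>{p..<q}. I_int k i) \<subseteq> e" "(\<Union>i\<in>{p..<q}. I_int k i) - S \<subseteq> e"
proof -
  obtain a b where ab: "0 \<le> a" "a \<le> b" "b \<le> 1" "{a<..<b} \<subseteq> S" "S \<subseteq> {a..b}"
    using interval_ab[OF S] by blast
  define p where "p = nat (round (real k * a))"
  define q where "q = nat (round (real k * b))"
  have k0: "0 < real k" using k by simp
  have pk: "p \<le> k" and pa: "\<bar>a - real p / real k\<bar> \<le> 1 / (2 * real k)"
    unfolding p_def using round_data[OF k, of a] ab by auto
  have qk: "q \<le> k" and qb: "\<bar>b - real q / real k\<bar> \<le> 1 / (2 * real k)"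
    unfolding q_def using round_data[OF k, of b] ab by auto
  have p01: "0 \<le> real p / real k" "real p / real k \<le> 1" using pk k0 by (auto simp: field_simps)
  have q01: "0 \<le> real q / real k" "real q / real k \<le> 1" using qk k0 by (auto simp: field_simps)
  define e1 where "e1 = {min a (real p / real k)..max a (real p / real k)}"
  define e2 where "e2 = {min b (real q / real k)..max b (real q / real k)}"
  define e where "e = e1 \<union> e2"
  note mem = mem_Iunion[OF k, of _ p q]
  have "S - (\<Union>i\<in>{p..<q}. I_int k i) \<subseteq> e"
  proof
    fix x assume x: "x \<in> S - (\<Union>i\<in>{p..<q}. I_int k i)"
    then have "a \<le> x" "x \<le> b" using ab(5) by auto
    moreover have "\<not> (real p / real k \<le> x \<and> x < real q / real k)" using x mem by auto
    ultimately show "x \<in> e" unfolding e_def e1_def e2_def by auto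
  qed
  moreover have "(\<Union>i\<in>{p..<q}. I_int k i) - S \<subseteq> e"
  proof
    fix x assume x: "x \<in> (\<Union>i\<in>{p..<q}. I_int k i) - S"
    then have "real p / real k \<le> x" "x < real q / real k" using mem by auto
    moreover have "\<not> (a < x \<and> x < b)" using x ab(4) by auto
    ultimately show "x \<in> e" unfolding e_def e1_def e2_def by auto
  qed
  moreover have "e \<in> sets borel" unfolding e_def e1_def e2_def by simp
  moreover have "e \<subseteq> {0..1}" unfolding e_def e1_def e2_def using ab p01 q01 by auto
  moreover have "emeasure lborel e \<le> ennreal (1 / real k)"
  proof -
    have "emeasure lborel e \<le> emeasure lborel e1 + emeasure lborel e2"
      unfolding e_def e1_def e2_def by (rule emeasure_subadditive) auto
    also have "\<dots> = ennreal \<bar>a - real p / real k\<bar> + ennreal \<bar>b - real q / real k\<bar>"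
      unfolding e1_def e2_def by (simp add: max_def min_def abs_if)
    also have "\<dots> = ennreal (\<bar>a - real p / real k\<bar> + \<bar>b - real q / real k\<bar>)"
      by (simp add: ennreal_plus)
    also have "\<dots> \<le> ennreal (1 / real k)"
      using pa qb by (intro ennreal_leI) (simp add: field_simps)
    finally show ?thesis .
  qed
  ultimately show ?thesis using that qk by blast
qed

lemma co_sub01: "0 \<le> a \<Longrightarrow> b \<le> 1 \<Longrightarrow> {a..<b} \<subseteq> {0..1::real}"
  by auto

lemma approx_2d:
  assumes k: "k \<ge> 1" and ST: "(S, T) \<in> Adm"
  obtains P Q eS eT where "P \<subseteq> {..<k}" "Q \<subseteq> {..<k}"
    "eS \<in> sets borel" "eS \<subseteq> {0..1}" "emeasure lborel eS \<le> ennreal (1 / real k)"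
    "eT \<in> sets borel" "eT \<subseteq> {0..1}" "emeasure lborel eT \<le> ennreal (1 / real k)"
    "\<And>m. m \<in> space SP \<Longrightarrow> \<bar>measure m (S \<times> T) - (\<Sum>ij\<in>P \<times> Q. Gv k m ij)\<bar>
        \<le> measure m (eS \<times> {0..1}) + measure m ({0..1} \<times> eT)"
proof -
  have S: "is_interval S" "S \<subseteq> {0..1}" and T: "is_interval T" "T \<subseteq> {0..1}" using ST by (auto simp: Adm_def)
  obtain p q eS where pq: "q \<le> k" "eS \<in> sets borel" "eS \<subseteq> {0..1}" "emeasure lborel eS \<le> ennreal (1 / real k)"
    "S - (\<Union>i\<in>{p..<q}. I_int k i) \<subseteq> eS" "(\<Union>i\<in>{p..<q}. I_int k i) - S \<subseteq> eS"
    by (rule approx_1d[OF k S])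
  obtain p' q' eT where pq': "q' \<le> k" "eT \<in> sets borel" "eT \<subseteq> {0..1}" "emeasure lborel eT \<le> ennreal (1 / real k)"
    "T - (\<Union>i\<in>{p'..<q'}. I_int k i) \<subseteq> eT" "(\<Union>i\<in>{p'..<q'}. I_int k i) - T \<subseteq> eT"
    by (rule approx_1d[OF k T])
  define P where "P = {p..<q}"
  define Q where "Q = {p'..<q'}"
  define S2 where "S2 = (\<Union>i\<in>P. I_int k i)"
  define T2 where "T2 = (\<Union>i\<in>Q. I_int k i)"
  have PK: "P \<subseteq> {..<k}" "Q \<subseteq> {..<k}" using pq(1) pq'(1) by (auto simp: P_def Q_def)
  have Sb: "S \<in> sets borel" "T \<in> sets borel"
    using real_interval_borel_measurable[OF S(1)] real_interval_borel_measurable[OF T(1)] by auto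
  have S2e: "S2 = {real p / real k ..< real q / real k}" unfolding S2_def P_def
    by (rule set_eqI, subst mem_Iunion[OF k]) simp
  have T2e: "T2 = {real p' / real k ..< real q' / real k}" unfolding T2_def Q_def
    by (rule set_eqI, subst mem_Iunion[OF k]) simp
  have S2b: "S2 \<in> sets borel" "T2 \<in> sets borel" unfolding S2e T2e by simp_all
  have k0: "0 < real k" using k by simp
  have q1: "real q / real k \<le> 1" "real q' / real k \<le> 1" using pq(1) pq'(1) k0 by (auto simp: field_simps)
  have S2s: "S2 \<subseteq> {0..1}" "T2 \<subseteq> {0..1}" unfolding S2e T2e
    by (rule co_sub01, simp, rule q1)+
  have main: "\<bar>measure m (S \<times> T) - (\<Sum>ij\<in>P \<times> Q. Gv k m ij)\<bar>
        \<le> measure m (eS \<times> {0..1}) + measure m ({0..1} \<times> eT)" if m: "m \<in> space SP" for m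
  proof -
    have fm: "finite_measure m" using m unfolding space_SP by (auto intro: subprob_space.axioms)
    have sm: "sets m = sets sq_space" using m unfolding space_SP by auto
    have inS: "X \<in> sets m" if "X \<in> sets borel" "X \<subseteq> {0..1} \<times> {0..1}" for X
      using that sm sets_sq by auto
    let ?A = "S \<times> T" and ?B = "S2 \<times> T2" and ?E1 = "eS \<times> {0..1::real}" and ?E2 = "{0..1::real} \<times> eT"
    have A: "?A \<in> sets m" using Sb S T by (intro inS times_borel) auto
    have B: "?B \<in> sets m" using S2b S2s by (intro inS times_borel) auto
    have E1: "?E1 \<in> sets m" using pq by (intro inS times_borel) auto
    have E2: "?E2 \<in> sets m" using pq' by (intro inS times_borel) auto
    have AB: "?A \<subseteq> ?B \<union> (?E1 \<union> ?E2)"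
    proof (rule subsetI)
      fix z assume "z \<in> ?A"
      then obtain x y where z: "z = (x, y)" and xy: "x \<in> S" "y \<in> T" by auto
      have x01: "x \<in> {0..1}" "y \<in> {0..1}" using xy S T by auto
      show "z \<in> ?B \<union> (?E1 \<union> ?E2)"
      proof (cases "x \<in> S2")
        case False
        then have "x \<in> eS" using pq(5) xy(1) unfolding S2_def P_def by blast
        then show ?thesis using z x01 by auto
      next
        case True
        show ?thesis
        proof (cases "y \<in> T2")
          case False
          then have "y \<in> eT" using pq'(5) xy(2) unfolding T2_def Q_def by blast
          then show ?thesis using z x01 by auto
        qed (use z True in auto)
      qed
    qed
    have BA: "?B \<subseteq> ?A \<union> (?E1 \<union> ?E2)"
    proof (rule subsetI)
      fix z assume "z \<in> ?B"
      then obtain x y where z: "z = (x, y)" and xy: "x \<in> S2" "y \<in> T2" by auto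
      have x01: "x \<in> {0..1}" "y \<in> {0..1}" using xy S2s by auto
      show "z \<in> ?A \<union> (?E1 \<union> ?E2)"
      proof (cases "x \<in> S")
        case False
        then have "x \<in> eS" using pq(6) xy(1) unfolding S2_def P_def by blast
        then show ?thesis using z x01 by auto
      next
        case True
        show ?thesis
        proof (cases "y \<in> T")
          case False
          then have "y \<in> eT" using pq'(6) xy(2) unfolding T2_def Q_def by blast
          then show ?thesis using z x01 by auto
        qed (use z True in auto)
      qed
    qed
    have "measure m ?A \<le> measure m (?B \<union> (?E1 \<union> ?E2))"
      using AB B E1 E2 by (intro finite_measure.finite_measure_mono[OF fm]) auto
    also have "\<dots> \<le> measure m ?B + measure m (?E1 \<union> ?E2)"
      using B E1 E2 by (intro measure_subadditive) (auto simp: finite_measure.emeasure_finite[OF fm])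
    also have "measure m (?E1 \<union> ?E2) \<le> measure m ?E1 + measure m ?E2"
      using E1 E2 by (intro measure_subadditive) (auto simp: finite_measure.emeasure_finite[OF fm])
    finally have i1: "measure m ?A \<le> measure m ?B + measure m ?E1 + measure m ?E2" by simp
    have "measure m ?B \<le> measure m (?A \<union> (?E1 \<union> ?E2))"
      using BA A E1 E2 by (intro finite_measure.finite_measure_mono[OF fm]) auto
    also have "\<dots> \<le> measure m ?A + measure m (?E1 \<union> ?E2)"
      using A E1 E2 by (intro measure_subadditive) (auto simp: finite_measure.emeasure_finite[OF fm])
    also have "measure m (?E1 \<union> ?E2) \<le> measure m ?E1 + measure m ?E2"
      using E1 E2 by (intro measure_subadditive) (auto simp: finite_measure.emeasure_finite[OF fm])
    finally have i2: "measure m ?B \<le> measure m ?A + measure m ?E1 + measure m ?E2" by simp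
    have Bsum: "measure m ?B = (\<Sum>ij\<in>P \<times> Q. Gv k m ij)"
    proof -
      have "?B = (\<Union>ij\<in>P \<times> Q. I_int k (fst ij) \<times> I_int k (snd ij))"
        unfolding S2_def T2_def by auto
      moreover have "measure m (\<Union>ij\<in>P \<times> Q. I_int k (fst ij) \<times> I_int k (snd ij)) = (\<Sum>ij\<in>P \<times> Q. measure m (I_int k (fst ij) \<times> I_int k (snd ij)))"
      proof (rule finite_measure.finite_measure_finite_Union[OF fm])
        show "finite (P \<times> Q)" by (simp add: P_def Q_def)
        show "(\<lambda>ij. I_int k (fst ij) \<times> I_int k (snd ij)) ` (P \<times> Q) \<subseteq> sets m"
          using PK sm by (auto intro!: rect_sq[OF k])
        show "disjoint_family_on (\<lambda>ij. I_int k (fst ij) \<times> I_int k (snd ij)) (P \<times> Q)"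
          unfolding disjoint_family_on_def using I_int_disj[OF k] by fastforce
      qed
      ultimately show ?thesis by (simp add: Gv_def)
    qed
    show ?thesis using i1 i2 unfolding Bsum by linarith
  qed
  show ?thesis by (rule that[OF PK pq(2,3,4) pq'(2,3,4) main])
qed


definition clampr :: "real \<Rightarrow> real" where "clampr x = max 0 (min 1 x)"
definition qz :: "nat \<Rightarrow> real \<Rightarrow> nat" where "qz L x = nat \<lfloor>clampr x * real L\<rfloor>"
definition cl :: "nat \<Rightarrow> nat \<Rightarrow> (nat \<times> nat \<Rightarrow> real) \<Rightarrow> (nat \<times> nat \<Rightarrow> nat)" where
  "cl k L X = (\<lambda>ij\<in>{..<k}\<times>{..<k}. qz L (X ij))"
definition Cells :: "nat \<Rightarrow> nat \<Rightarrow> (nat \<times> nat \<Rightarrow> nat) set" where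
  "Cells k L = PiE ({..<k}\<times>{..<k}) (\<lambda>_. {0..L})"
definition Phi :: "nat \<Rightarrow> nat \<Rightarrow> (nat \<times> nat \<Rightarrow> nat) \<Rightarrow> (nat \<times> nat \<Rightarrow> nat) \<Rightarrow> real" where
  "Phi k L c c' = (\<Sum>ij\<in>{..<k}\<times>{..<k}. \<bar>real (c ij) - real (c' ij)\<bar> / real L)"

lemma clamp_01: "0 \<le> clampr x" "clampr x \<le> 1" by (auto simp: clampr_def)
lemma clamp_id: "0 \<le> x \<Longrightarrow> x \<le> 1 \<Longrightarrow> clampr x = x" by (auto simp: clampr_def)
lemma clamp_lip: "\<bar>clampr x - clampr y\<bar> \<le> \<bar>x - y\<bar>" by (auto simp: clampr_def)

lemma qz_le: "qz L x \<le> L"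
proof -
  have "clampr x * real L \<le> real L" using clamp_01[of x] by (simp add: mult_left_le_one_le)
  then have "\<lfloor>clampr x * real L\<rfloor> \<le> int L" by (simp add: floor_le_iff)
  then show ?thesis unfolding qz_def by linarith
qed

lemma qz_approx:
  assumes L: "L \<ge> 1"
  shows "\<bar>clampr x - real (qz L x) / real L\<bar> \<le> 1 / real L"
proof -
  have L0: "0 < real L" using L by simp
  have nn: "0 \<le> clampr x * real L" using clamp_01[of x] by simp
  have e: "real (qz L x) = of_int \<lfloor>clampr x * real L\<rfloor>" unfolding qz_def using nn by simp
  have a: "of_int \<lfloor>clampr x * real L\<rfloor> \<le> clampr x * real L" "clampr x * real L < of_int \<lfloor>clampr x * real L\<rfloor> + 1"
    by linarith+
  have "\<bar>clampr x - real (qz L x) / real L\<bar> = \<bar>clampr x * real L - real (qz L x)\<bar> / real L"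
    using L0 by (simp add: field_simps abs_div_pos[symmetric])
  also have "\<dots> \<le> 1 / real L"
  proof (rule divide_right_mono)
    show "\<bar>clampr x * real L - real (qz L x)\<bar> \<le> 1" unfolding e abs_le_iff using a by linarith
  qed (use L0 in simp)
  finally show ?thesis .
qed

lemma qz_lip:
  assumes L: "L \<ge> 1"
  shows "\<bar>real (qz L x) - real (qz L y)\<bar> / real L \<le> \<bar>x - y\<bar> + 2 / real L"
proof -
  have L0: "0 < real L" using L by simp
  have "\<bar>real (qz L x) - real (qz L y)\<bar> / real L = \<bar>real (qz L x) / real L - real (qz L y) / real L\<bar>"
    using L0 by (simp add: field_simps abs_div_pos[symmetric])
  also have "\<dots> \<le> \<bar>clampr x - clampr y\<bar> + 2 / real L"
    using qz_approx[OF L, of x] qz_approx[OF L, of y] by linarith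
  also have "\<dots> \<le> \<bar>x - y\<bar> + 2 / real L" using clamp_lip[of x y] by linarith
  finally show ?thesis .
qed

lemma qz_lip2:
  assumes L: "L \<ge> 1" and x: "0 \<le> x" "x \<le> 1" and y: "0 \<le> y" "y \<le> 1"
  shows "\<bar>x - y\<bar> \<le> \<bar>real (qz L x) - real (qz L y)\<bar> / real L + 2 / real L"
proof -
  have L0: "0 < real L" using L by simp
  have "\<bar>real (qz L x) - real (qz L y)\<bar> / real L = \<bar>real (qz L x) / real L - real (qz L y) / real L\<bar>"
    using L0 by (simp add: field_simps abs_div_pos[symmetric])
  then show ?thesis
    using qz_approx[OF L, of x] qz_approx[OF L, of y] clamp_id[OF x] clamp_id[OF y] by linarith
qed

lemma cl_Cells: "cl k L X \<in> Cells k L"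
  unfolding cl_def Cells_def using qz_le by auto

lemma finite_Cells: "finite (Cells k L)"
  unfolding Cells_def by (intro finite_PiE) auto

lemma countable_Cells: "countable (Cells k L)"
  using finite_Cells by (rule countable_finite)

lemma Phi_nonneg: "0 \<le> Phi k L c c'"
  unfolding Phi_def by (intro sum_nonneg) auto

lemma Phi_cl_le:
  assumes L: "L \<ge> 1"
  shows "Phi k L (cl k L X) (cl k L Y) \<le> (\<Sum>ij\<in>{..<k}\<times>{..<k}. \<bar>X ij - Y ij\<bar>) + 2 * real (k^2) / real L"
proof -
  have "Phi k L (cl k L X) (cl k L Y) = (\<Sum>ij\<in>{..<k}\<times>{..<k}. \<bar>real (qz L (X ij)) - real (qz L (Y ij))\<bar> / real L)"
    unfolding Phi_def cl_def by (intro sum.cong) auto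
  also have "\<dots> \<le> (\<Sum>ij\<in>{..<k}\<times>{..<k}. \<bar>X ij - Y ij\<bar> + 2 / real L)"
    by (intro sum_mono qz_lip[OF L])
  also have "\<dots> = (\<Sum>ij\<in>{..<k}\<times>{..<k}. \<bar>X ij - Y ij\<bar>) + 2 * real (k^2) / real L"
    by (simp add: sum.distrib power2_eq_square)
  finally show ?thesis .
qed

lemma Gv_Phi_le:
  assumes L: "L \<ge> 1" and m: "m \<in> space SP" and n: "n \<in> space SP"
  shows "(\<Sum>ij\<in>{..<k}\<times>{..<k}. \<bar>Gv k m ij - Gv k n ij\<bar>) \<le> Phi k L (cl k L (Gf k m)) (cl k L (Gf k n)) + 2 * real (k^2) / real L"
proof -
  have "(\<Sum>ij\<in>{..<k}\<times>{..<k}. \<bar>Gv k m ij - Gv k n ij\<bar>) \<le> (\<Sum>ij\<in>{..<k}\<times>{..<k}. \<bar>real (qz L (Gv k m ij)) - real (qz L (Gv k n ij))\<bar> / real L + 2 / real L)"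
    using Gv_bounds[OF m] Gv_bounds[OF n] by (intro sum_mono qz_lip2[OF L]) auto
  also have "\<dots> = Phi k L (cl k L (Gf k m)) (cl k L (Gf k n)) + 2 * real (k^2) / real L"
    unfolding Phi_def cl_def Gf_def by (simp add: sum.distrib power2_eq_square)
  finally show ?thesis .
qed

lemma cl_meas:
  assumes L: "L \<ge> 1"
  shows "cl k L \<in> mat_space k \<rightarrow>\<^sub>M count_space (Cells k L)"
proof (subst measurable_count_space_eq2[OF finite_Cells], intro conjI ballI)
  show "cl k L \<in> space (mat_space k) \<rightarrow> Cells k L" using cl_Cells by auto
  fix c assume c: "c \<in> Cells k L"
  have eq: "cl k L -` {c} \<inter> space (mat_space k) = {X \<in> space (mat_space k). \<forall>ij\<in>{..<k}\<times>{..<k}. qz L (X ij) = c ij}"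
  proof -
    have "cl k L X = c \<longleftrightarrow> (\<forall>ij\<in>{..<k}\<times>{..<k}. qz L (X ij) = c ij)" for X
      using c unfolding cl_def Cells_def by (auto simp: PiE_iff extensional_def fun_eq_iff)
    then show ?thesis by auto
  qed
  have comp: "(\<lambda>X. X ij) \<in> mat_space k \<rightarrow>\<^sub>M borel" if "ij \<in> {..<k}\<times>{..<k}" for ij
    unfolding mat_space_def using that by (rule measurable_component_singleton)
  have qzm: "qz L \<in> borel \<rightarrow>\<^sub>M count_space UNIV"
  proof -
    have "(\<lambda>x. clampr x * real L) \<in> borel \<rightarrow>\<^sub>M borel" unfolding clampr_def by measurable
    then have "(\<lambda>x. \<lfloor>clampr x * real L\<rfloor>) \<in> borel \<rightarrow>\<^sub>M count_space UNIV"
      using measurable_compose[OF _ measurable_real_floor] by (simp add: comp_def)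
    then show ?thesis unfolding qz_def by (rule measurable_compose[OF _ measurable_count_space_eq1[THEN iffD2]]) simp
  qed
  have "Measurable.pred (mat_space k) (\<lambda>X. \<forall>ij\<in>{..<k}\<times>{..<k}. qz L (X ij) = c ij)"
  proof (rule pred_intros_finite(3))
    fix ij assume ij: "ij \<in> {..<k}\<times>{..<k}"
    show "Measurable.pred (mat_space k) (\<lambda>X. qz L (X ij) = c ij)"
      by (rule pred_eq_const1[where N="count_space UNIV"]) (auto intro: measurable_compose[OF comp[OF ij] qzm])
  qed simp
  then show "cl k L -` {c} \<inter> space (mat_space k) \<in> sets (mat_space k)"
    unfolding eq by (simp add: pred_def)
qed


lemma fin_part_sets:
  assumes g: "g \<in> Q \<rightarrow>\<^sub>M count_space Cs" and c: "c \<in> Cs"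
  shows "{x \<in> space Q. g x = c} \<in> sets Q"
proof -
  have "g -` {c} \<inter> space Q \<in> sets Q" using c by (intro measurable_sets[OF g]) auto
  moreover have "g -` {c} \<inter> space Q = {x \<in> space Q. g x = c}" by auto
  ultimately show ?thesis by simp
qed

lemma nn_integral_fin_part:
  assumes fin: "finite_measure Q" and Cs: "finite Cs" and g: "g \<in> Q \<rightarrow>\<^sub>M count_space Cs"
    and F: "\<And>c. 0 \<le> F c"
  shows "(\<integral>\<^sup>+x. ennreal (F (g x)) \<partial>Q) = ennreal (\<Sum>c\<in>Cs. F c * measure Q {x \<in> space Q. g x = c})"
proof -
  have "(\<integral>\<^sup>+x. ennreal (F (g x)) \<partial>Q) = (\<integral>\<^sup>+x. (\<Sum>c\<in>Cs. ennreal (F c) * indicator {x \<in> space Q. g x = c} x) \<partial>Q)"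
  proof (intro nn_integral_cong)
    fix x assume x: "x \<in> space Q"
    then have gx: "g x \<in> Cs" using measurable_space[OF g x] by simp
    have "(\<Sum>c\<in>Cs. ennreal (F c) * indicator {x \<in> space Q. g x = c} x) = (\<Sum>c\<in>Cs. if c = g x then ennreal (F c) else 0)"
      using x by (intro sum.cong) (auto simp: indicator_def)
    also have "\<dots> = ennreal (F (g x))" using Cs gx by (simp add: sum.delta)
    finally show "ennreal (F (g x)) = (\<Sum>c\<in>Cs. ennreal (F c) * indicator {x \<in> space Q. g x = c} x)" by simp
  qed
  also have "\<dots> = (\<Sum>c\<in>Cs. \<integral>\<^sup>+x. ennreal (F c) * indicator {x \<in> space Q. g x = c} x \<partial>Q)"
    using fin_part_sets[OF g] by (intro nn_integral_sum) auto
  also have "\<dots> = (\<Sum>c\<in>Cs. ennreal (F c) * emeasure Q {x \<in> space Q. g x = c})"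
    using fin_part_sets[OF g] by (intro sum.cong refl) (simp add: nn_integral_cmult_indicator)
  also have "\<dots> = (\<Sum>c\<in>Cs. ennreal (F c * measure Q {x \<in> space Q. g x = c}))"
    using F by (intro sum.cong refl) (simp add: finite_measure.emeasure_eq_measure[OF fin] ennreal_mult)
  also have "\<dots> = ennreal (\<Sum>c\<in>Cs. F c * measure Q {x \<in> space Q. g x = c})"
    using F by (intro sum_ennreal) auto
  finally show ?thesis .
qed


locale glue =
  fixes M N :: "(real \<times> real) measure measure" and k L :: nat
    and C :: "((nat \<times> nat \<Rightarrow> real) \<times> (nat \<times> nat \<Rightarrow> real)) measure"
  assumes pM: "prob_space M" and pN: "prob_space N"
    and sM: "sets M = sets SP" and sN: "sets N = sets SP"
    and k: "k \<ge> 1" and L: "L \<ge> 1"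
    and C: "C \<in> couplings (G_law k M) (G_law k N)"
begin

abbreviation "CS \<equiv> Cells k L"
definition hh where "hh m = cl k L (Gf k m)"
definition al where "al c = measure M {m \<in> space M. hh m = c}"
definition be where "be c = measure N {n \<in> space N. hh n = c}"
definition ga where "ga c c' = measure C {p \<in> space C. cl k L (fst p) = c \<and> cl k L (snd p) = c'}"
definition w where "w c c' = ga c c' / (al c * be c')"
definition D where "D = density (M \<Otimes>\<^sub>M N) (\<lambda>p. ennreal (w (hh (fst p)) (hh (snd p))))"

lemmas CF = coupling_facts[OF C]

lemma GM: "Gf k \<in> M \<rightarrow>\<^sub>M mat_space k" using Gf_meas[OF k] by (simp add: measurable_cong_sets[OF sM refl])
lemma GN: "Gf k \<in> N \<rightarrow>\<^sub>M mat_space k" using Gf_meas[OF k] by (simp add: measurable_cong_sets[OF sN refl])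

lemma hhM: "hh \<in> M \<rightarrow>\<^sub>M count_space CS"
  unfolding hh_def[abs_def] using measurable_compose[OF GM cl_meas[OF L]] by (simp add: comp_def)
lemma hhN: "hh \<in> N \<rightarrow>\<^sub>M count_space CS"
  unfolding hh_def[abs_def] using measurable_compose[OF GN cl_meas[OF L]] by (simp add: comp_def)
lemma hh_CS: "hh m \<in> CS" unfolding hh_def by (rule cl_Cells)

lemma sGM: "sets (G_law k M) = sets (mat_space k)" "sets (G_law k N) = sets (mat_space k)"
  by (simp_all add: G_law_alt)

lemma clM: "cl k L \<in> G_law k M \<rightarrow>\<^sub>M count_space CS"
  using cl_meas[OF L] by (simp add: measurable_cong_sets[OF sGM(1) refl])
lemma clN: "cl k L \<in> G_law k N \<rightarrow>\<^sub>M count_space CS"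
  using cl_meas[OF L] by (simp add: measurable_cong_sets[OF sGM(2) refl])

lemma clf: "(\<lambda>p. cl k L (fst p)) \<in> C \<rightarrow>\<^sub>M count_space CS"
  using measurable_compose[OF CF(5) clM] by (simp add: comp_def)
lemma cls: "(\<lambda>p. cl k L (snd p)) \<in> C \<rightarrow>\<^sub>M count_space CS"
  using measurable_compose[OF CF(6) clN] by (simp add: comp_def)

lemma CS_pair: "count_space CS \<Otimes>\<^sub>M count_space CS = count_space (CS \<times> CS)"
  by (rule pair_measure_countable[OF countable_Cells countable_Cells])

lemma clpair: "(\<lambda>p. (cl k L (fst p), cl k L (snd p))) \<in> C \<rightarrow>\<^sub>M count_space (CS \<times> CS)"
  using measurable_Pair[OF clf cls] by (simp add: CS_pair)

interpretation MN: pair_prob_space M N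
  by (simp add: pair_prob_space_def pair_sigma_finite_def pM pN prob_space_imp_sigma_finite)

lemma hhpair: "(\<lambda>p. (hh (fst p), hh (snd p))) \<in> (M \<Otimes>\<^sub>M N) \<rightarrow>\<^sub>M count_space (CS \<times> CS)"
  using measurable_Pair[OF measurable_compose[OF measurable_fst hhM] measurable_compose[OF measurable_snd hhN]]
  by (simp add: CS_pair comp_def)

lemma finC: "finite_measure C" using CF(1) by (simp add: prob_space_def)

lemma ga_sets: "c \<in> CS \<Longrightarrow> c' \<in> CS \<Longrightarrow> {p \<in> space C. cl k L (fst p) = c \<and> cl k L (snd p) = c'} \<in> sets C"
  using fin_part_sets[OF clpair, of "(c, c')"] by simp

lemma ga_nonneg: "0 \<le> ga c c'" unfolding ga_def by simp
lemma al_nonneg: "0 \<le> al c" unfolding al_def by simp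
lemma be_nonneg: "0 \<le> be c" unfolding be_def by simp
lemma w_nonneg: "0 \<le> w c c'" unfolding w_def using ga_nonneg al_nonneg be_nonneg by simp

lemma C_fst: assumes c: "c \<in> CS" shows "measure C {p \<in> space C. cl k L (fst p) = c} = al c"
proof -
  let ?X = "{X \<in> space (G_law k M). cl k L X = c}"
  have X: "?X \<in> sets (G_law k M)" by (rule fin_part_sets[OF clM c])
  have "{p \<in> space C. cl k L (fst p) = c} = fst -` ?X \<inter> space C"
    using measurable_space[OF CF(5)] by auto
  then have "measure C {p \<in> space C. cl k L (fst p) = c} = measure (distr C (G_law k M) fst) ?X"
    by (simp add: measure_distr[OF CF(5) X])
  also have "\<dots> = measure (G_law k M) ?X" by (simp add: CF(3))
  also have "\<dots> = measure M (Gf k -` ?X \<inter> space M)"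
    unfolding G_law_alt using X by (subst measure_distr[OF GM]) (simp_all add: G_law_alt)
  also have "Gf k -` ?X \<inter> space M = {m \<in> space M. hh m = c}"
    using measurable_space[OF GM] by (auto simp: hh_def G_law_alt)
  finally show ?thesis unfolding al_def .
qed

lemma C_snd: assumes c: "c \<in> CS" shows "measure C {p \<in> space C. cl k L (snd p) = c} = be c"
proof -
  let ?X = "{X \<in> space (G_law k N). cl k L X = c}"
  have X: "?X \<in> sets (G_law k N)" by (rule fin_part_sets[OF clN c])
  have "{p \<in> space C. cl k L (snd p) = c} = snd -` ?X \<inter> space C"
    using measurable_space[OF CF(6)] by auto
  then have "measure C {p \<in> space C. cl k L (snd p) = c} = measure (distr C (G_law k N) snd) ?X"
    by (simp add: measure_distr[OF CF(6) X])
  also have "\<dots> = measure (G_law k N) ?X" by (simp add: CF(4))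
  also have "\<dots> = measure N (Gf k -` ?X \<inter> space N)"
    unfolding G_law_alt using X by (subst measure_distr[OF GN]) (simp_all add: G_law_alt)
  also have "Gf k -` ?X \<inter> space N = {n \<in> space N. hh n = c}"
    using measurable_space[OF GN] by (auto simp: hh_def G_law_alt)
  finally show ?thesis unfolding be_def .
qed

lemma ga_sum1: assumes c: "c \<in> CS" shows "(\<Sum>c'\<in>CS. ga c c') = al c"
proof -
  have "{p \<in> space C. cl k L (fst p) = c} = (\<Union>c'\<in>CS. {p \<in> space C. cl k L (fst p) = c \<and> cl k L (snd p) = c'})"
    using cl_Cells by auto
  then have "al c = measure C (\<Union>c'\<in>CS. {p \<in> space C. cl k L (fst p) = c \<and> cl k L (snd p) = c'})"
    using C_fst[OF c] by simp
  also have "\<dots> = (\<Sum>c'\<in>CS. ga c c')" unfolding ga_def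
    by (rule finite_measure.finite_measure_finite_Union[OF finC finite_Cells])
       (auto intro!: ga_sets c simp: disjoint_family_on_def)
  finally show ?thesis by simp
qed

lemma ga_sum2: assumes c': "c' \<in> CS" shows "(\<Sum>c\<in>CS. ga c c') = be c'"
proof -
  have "{p \<in> space C. cl k L (snd p) = c'} = (\<Union>c\<in>CS. {p \<in> space C. cl k L (fst p) = c \<and> cl k L (snd p) = c'})"
    using cl_Cells by auto
  then have "be c' = measure C (\<Union>c\<in>CS. {p \<in> space C. cl k L (fst p) = c \<and> cl k L (snd p) = c'})"
    using C_snd[OF c'] by simp
  also have "\<dots> = (\<Sum>c\<in>CS. ga c c')" unfolding ga_def
    by (rule finite_measure.finite_measure_finite_Union[OF finC finite_Cells])
       (auto intro!: ga_sets c' simp: disjoint_family_on_def)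
  finally show ?thesis by simp
qed

lemma ga_zero1: "c \<in> CS \<Longrightarrow> c' \<in> CS \<Longrightarrow> al c = 0 \<Longrightarrow> ga c c' = 0"
  using ga_sum1[of c] member_le_sum[of c' CS "ga c"] ga_nonneg finite_Cells
  by (metis antisym)

lemma ga_zero2: "c \<in> CS \<Longrightarrow> c' \<in> CS \<Longrightarrow> be c' = 0 \<Longrightarrow> ga c c' = 0"
  using ga_sum2[of c'] member_le_sum[of c CS "\<lambda>c. ga c c'"] ga_nonneg finite_Cells
  by (metis antisym)

lemma w_mult: assumes "c \<in> CS" "c' \<in> CS" shows "w c c' * al c * be c' = ga c c'"
proof (cases "al c = 0 \<or> be c' = 0")
  case True then show ?thesis using ga_zero1[OF assms] ga_zero2[OF assms] by auto
next
  case False then show ?thesis unfolding w_def by (simp add: field_simps)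
qed

lemma sum_w_be: assumes c: "c \<in> CS" shows "(\<Sum>c'\<in>CS. w c c' * be c') = (if al c = 0 then 0 else 1)"
proof (cases "al c = 0")
  case True then show ?thesis by (simp add: w_def)
next
  case False
  have "w c c' * be c' = ga c c' / al c" if c': "c' \<in> CS" for c'
  proof (cases "be c' = 0")
    case True then show ?thesis using ga_zero2[OF c c'] by simp
  next
    case False then show ?thesis using \<open>al c \<noteq> 0\<close> by (simp add: w_def field_simps)
  qed
  then have "(\<Sum>c'\<in>CS. w c c' * be c') = (\<Sum>c'\<in>CS. ga c c') / al c"
    by (simp add: sum_divide_distrib)
  also have "\<dots> = 1" using ga_sum1[OF c] False by simp
  finally show ?thesis using False by simp
qed

lemma sum_w_al: assumes c': "c' \<in> CS" shows "(\<Sum>c\<in>CS. w c c' * al c) = (if be c' = 0 then 0 else 1)"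
proof (cases "be c' = 0")
  case True then show ?thesis by (simp add: w_def)
next
  case False
  have "w c c' * al c = ga c c' / be c'" if c: "c \<in> CS" for c
  proof (cases "al c = 0")
    case True then show ?thesis using ga_zero1[OF c c'] by simp
  next
    case False then show ?thesis using \<open>be c' \<noteq> 0\<close> by (simp add: w_def field_simps)
  qed
  then have "(\<Sum>c\<in>CS. w c c' * al c) = (\<Sum>c\<in>CS. ga c c') / be c'"
    by (simp add: sum_divide_distrib)
  also have "\<dots> = 1" using ga_sum2[OF c'] False by simp
  finally show ?thesis using False by simp
qed

lemma wmeas: "(\<lambda>p. ennreal (w (hh (fst p)) (hh (snd p)))) \<in> borel_measurable (M \<Otimes>\<^sub>M N)"
  using measurable_compose[OF hhpair borel_measurable_count_space[of "\<lambda>cc. ennreal (w (fst cc) (snd cc))"]]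
  by (simp add: comp_def)

lemma sets_D: "sets D = sets (M \<Otimes>\<^sub>M N)" unfolding D_def by simp
lemma space_D: "space D = space M \<times> space N" unfolding D_def by (simp add: space_pair_measure)

lemma inner_N: assumes c: "c \<in> CS"
  shows "(\<integral>\<^sup>+n. ennreal (w c (hh n)) \<partial>N) = (if al c = 0 then 0 else 1)"
proof -
  have "(\<integral>\<^sup>+n. ennreal (w c (hh n)) \<partial>N) = ennreal (\<Sum>c'\<in>CS. w c c' * measure N {n \<in> space N. hh n = c'})"
    using pN by (intro nn_integral_fin_part[OF _ finite_Cells hhN w_nonneg]) (simp add: prob_space_def)
  also have "\<dots> = ennreal (if al c = 0 then 0 else 1)" using sum_w_be[OF c] by (simp add: be_def)
  finally show ?thesis by simp
qed

lemma inner_M: assumes c': "c' \<in> CS"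
  shows "(\<integral>\<^sup>+m. ennreal (w (hh m) c') \<partial>M) = (if be c' = 0 then 0 else 1)"
proof -
  have "(\<integral>\<^sup>+m. ennreal (w (hh m) c') \<partial>M) = ennreal (\<Sum>c\<in>CS. w c c' * measure M {m \<in> space M. hh m = c})"
    using pM by (intro nn_integral_fin_part[OF _ finite_Cells hhM]) (simp_all add: prob_space_def w_nonneg)
  also have "\<dots> = ennreal (if be c' = 0 then 0 else 1)" using sum_w_al[OF c'] by (simp add: al_def)
  finally show ?thesis by simp
qed

lemma AE_al: "AE m in M. al (hh m) \<noteq> 0"
proof -
  have "AE m in M. \<forall>c\<in>CS. hh m = c \<longrightarrow> al c \<noteq> 0"
  proof (rule AE_finite_allI[OF finite_Cells])
    fix c assume c: "c \<in> CS"
    show "AE m in M. hh m = c \<longrightarrow> al c \<noteq> 0"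
    proof (cases "al c = 0")
      case True
      let ?A = "{m \<in> space M. hh m = c}"
      have A: "?A \<in> sets M" by (rule fin_part_sets[OF hhM c])
      have "emeasure M ?A = 0" using True A MN.M1.emeasure_eq_measure by (simp add: al_def)
      then have "?A \<in> null_sets M" using A by auto
      from AE_not_in[OF this] AE_space show ?thesis by eventually_elim (use True in auto)
    qed simp
  qed
  then show ?thesis by eventually_elim (use hh_CS in auto)
qed

lemma AE_be: "AE n in N. be (hh n) \<noteq> 0"
proof -
  have "AE n in N. \<forall>c\<in>CS. hh n = c \<longrightarrow> be c \<noteq> 0"
  proof (rule AE_finite_allI[OF finite_Cells])
    fix c assume c: "c \<in> CS"
    show "AE n in N. hh n = c \<longrightarrow> be c \<noteq> 0"
    proof (cases "be c = 0")
      case True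
      let ?A = "{n \<in> space N. hh n = c}"
      have A: "?A \<in> sets N" by (rule fin_part_sets[OF hhN c])
      have "emeasure N ?A = 0" using True A MN.M2.emeasure_eq_measure by (simp add: be_def)
      then have "?A \<in> null_sets N" using A by auto
      from AE_not_in[OF this] AE_space show ?thesis by eventually_elim (use True in auto)
    qed simp
  qed
  then show ?thesis by eventually_elim (use hh_CS in auto)
qed

lemma hhM': "(\<lambda>n. ennreal (w c (hh n))) \<in> borel_measurable N"
  using measurable_compose[OF hhN borel_measurable_count_space[of "\<lambda>c'. ennreal (w c c')"]] by (simp add: comp_def)
lemma hhN': "(\<lambda>m. ennreal (w (hh m) c')) \<in> borel_measurable M"
  using measurable_compose[OF hhM borel_measurable_count_space[of "\<lambda>c. ennreal (w c c')"]] by (simp add: comp_def)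

lemma marg1: assumes A: "A \<in> sets M" shows "emeasure D (A \<times> space N) = emeasure M A"
proof -
  have AN: "A \<times> space N \<in> sets (M \<Otimes>\<^sub>M N)" using A by auto
  have "emeasure D (A \<times> space N) = (\<integral>\<^sup>+p. ennreal (w (hh (fst p)) (hh (snd p))) * indicator (A \<times> space N) p \<partial>(M \<Otimes>\<^sub>M N))"
    unfolding D_def by (rule emeasure_density[OF wmeas AN])
  also have "\<dots> = (\<integral>\<^sup>+m. \<integral>\<^sup>+n. ennreal (w (hh m) (hh n)) * indicator (A \<times> space N) (m, n) \<partial>N \<partial>M)"
  proof -
    note [measurable] = wmeas AN
    have "(\<lambda>p. ennreal (w (hh (fst p)) (hh (snd p))) * indicator (A \<times> space N) p) \<in> borel_measurable (M \<Otimes>\<^sub>M N)"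
      by measurable
    from sigma_finite_measure.nn_integral_fst[OF prob_space_imp_sigma_finite[OF pN] this] show ?thesis by simp
  qed
  also have "\<dots> = (\<integral>\<^sup>+m. indicator A m * (\<integral>\<^sup>+n. ennreal (w (hh m) (hh n)) \<partial>N) \<partial>M)"
  proof (rule nn_integral_cong)
    fix m assume m: "m \<in> space M"
    have "(\<integral>\<^sup>+n. ennreal (w (hh m) (hh n)) * indicator (A \<times> space N) (m, n) \<partial>N) = (\<integral>\<^sup>+n. indicator A m * ennreal (w (hh m) (hh n)) \<partial>N)"
      by (intro nn_integral_cong) (auto simp: indicator_def)
    also have "\<dots> = indicator A m * (\<integral>\<^sup>+n. ennreal (w (hh m) (hh n)) \<partial>N)"
      by (rule nn_integral_cmult[OF hhM'])
    finally show "(\<integral>\<^sup>+n. ennreal (w (hh m) (hh n)) * indicator (A \<times> space N) (m, n) \<partial>N) = indicator A m * (\<integral>\<^sup>+n. ennreal (w (hh m) (hh n)) \<partial>N)" .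
  qed
  also have "\<dots> = (\<integral>\<^sup>+m. indicator A m \<partial>M)"
  proof (rule nn_integral_cong_AE)
    show "AE m in M. indicator A m * (\<integral>\<^sup>+n. ennreal (w (hh m) (hh n)) \<partial>N) = indicator A m"
      using AE_al by eventually_elim (simp add: inner_N[OF hh_CS])
  qed
  also have "\<dots> = emeasure M A" using A by simp
  finally show ?thesis .
qed

lemma marg2: assumes B: "B \<in> sets N" shows "emeasure D (space M \<times> B) = emeasure N B"
proof -
  have MB: "space M \<times> B \<in> sets (M \<Otimes>\<^sub>M N)" using B by auto
  have "emeasure D (space M \<times> B) = (\<integral>\<^sup>+p. ennreal (w (hh (fst p)) (hh (snd p))) * indicator (space M \<times> B) p \<partial>(M \<Otimes>\<^sub>M N))"
    unfolding D_def by (rule emeasure_density[OF wmeas MB])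
  also have "\<dots> = (\<integral>\<^sup>+n. \<integral>\<^sup>+m. ennreal (w (hh m) (hh n)) * indicator (space M \<times> B) (m, n) \<partial>M \<partial>N)"
  proof -
    note [measurable] = wmeas MB
    have "(\<lambda>p. ennreal (w (hh (fst p)) (hh (snd p))) * indicator (space M \<times> B) p) \<in> borel_measurable (M \<Otimes>\<^sub>M N)"
      by measurable
    from pair_sigma_finite.nn_integral_snd[OF MN.pair_sigma_finite_axioms this] show ?thesis by simp
  qed
  also have "\<dots> = (\<integral>\<^sup>+n. indicator B n * (\<integral>\<^sup>+m. ennreal (w (hh m) (hh n)) \<partial>M) \<partial>N)"
  proof (rule nn_integral_cong)
    fix n assume n: "n \<in> space N"
    have "(\<integral>\<^sup>+m. ennreal (w (hh m) (hh n)) * indicator (space M \<times> B) (m, n) \<partial>M) = (\<integral>\<^sup>+m. indicator B n * ennreal (w (hh m) (hh n)) \<partial>M)"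
      by (intro nn_integral_cong) (auto simp: indicator_def)
    also have "\<dots> = indicator B n * (\<integral>\<^sup>+m. ennreal (w (hh m) (hh n)) \<partial>M)"
      by (rule nn_integral_cmult[OF hhN'])
    finally show "(\<integral>\<^sup>+m. ennreal (w (hh m) (hh n)) * indicator (space M \<times> B) (m, n) \<partial>M) = indicator B n * (\<integral>\<^sup>+m. ennreal (w (hh m) (hh n)) \<partial>M)" .
  qed
  also have "\<dots> = (\<integral>\<^sup>+n. indicator B n \<partial>N)"
  proof (rule nn_integral_cong_AE)
    show "AE n in N. indicator B n * (\<integral>\<^sup>+m. ennreal (w (hh m) (hh n)) \<partial>M) = indicator B n"
      using AE_be by eventually_elim (simp add: inner_M[OF hh_CS])
  qed
  also have "\<dots> = emeasure N B" using B by simp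
  finally show ?thesis .
qed

lemma D_fst_meas: "fst \<in> D \<rightarrow>\<^sub>M M"
  using measurable_fst by (simp add: measurable_cong_sets[OF sets_D refl])
lemma D_snd_meas: "snd \<in> D \<rightarrow>\<^sub>M N"
  using measurable_snd by (simp add: measurable_cong_sets[OF sets_D refl])

lemma distr_D_fst: "distr D M fst = M"
proof (rule measure_eqI)
  show "sets (distr D M fst) = sets M" by simp
  fix A assume "A \<in> sets (distr D M fst)"
  then have A: "A \<in> sets M" by simp
  have "fst -` A \<inter> space D = A \<times> space N" using sets.sets_into_space[OF A] by (auto simp: space_D)
  then show "emeasure (distr D M fst) A = emeasure M A"
    using marg1[OF A] by (simp add: emeasure_distr[OF D_fst_meas A])
qed

lemma distr_D_snd: "distr D N snd = N"
proof (rule measure_eqI)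
  show "sets (distr D N snd) = sets N" by simp
  fix B assume "B \<in> sets (distr D N snd)"
  then have B: "B \<in> sets N" by simp
  have "snd -` B \<inter> space D = space M \<times> B" using sets.sets_into_space[OF B] by (auto simp: space_D)
  then show "emeasure (distr D N snd) B = emeasure N B"
    using marg2[OF B] by (simp add: emeasure_distr[OF D_snd_meas B])
qed

lemma prob_D: "prob_space D"
proof (rule prob_spaceI)
  have "emeasure D (space D) = emeasure M (space M)" unfolding space_D by (rule marg1) simp
  then show "emeasure D (space D) = 1" using prob_space.emeasure_space_1[OF pM] by simp
qed

lemma D_coupling: "D \<in> couplings M N"
  unfolding couplings_def using prob_D sets_D distr_D_fst distr_D_snd by simp

lemma D_rect:
  assumes c: "c \<in> CS" and c': "c' \<in> CS"
  shows "emeasure D ({m \<in> space M. hh m = c} \<times> {n \<in> space N. hh n = c'}) = ennreal (ga c c')"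
proof -
  let ?A = "{m \<in> space M. hh m = c}" and ?B = "{n \<in> space N. hh n = c'}"
  have A: "?A \<in> sets M" by (rule fin_part_sets[OF hhM c])
  have B: "?B \<in> sets N" by (rule fin_part_sets[OF hhN c'])
  have R: "?A \<times> ?B \<in> sets (M \<Otimes>\<^sub>M N)" using A B by auto
  have "emeasure D (?A \<times> ?B) = (\<integral>\<^sup>+p. ennreal (w (hh (fst p)) (hh (snd p))) * indicator (?A \<times> ?B) p \<partial>(M \<Otimes>\<^sub>M N))"
    unfolding D_def by (rule emeasure_density[OF wmeas R])
  also have "\<dots> = (\<integral>\<^sup>+p. ennreal (w c c') * indicator (?A \<times> ?B) p \<partial>(M \<Otimes>\<^sub>M N))"
    by (intro nn_integral_cong) (auto simp: indicator_def)
  also have "\<dots> = ennreal (w c c') * emeasure (M \<Otimes>\<^sub>M N) (?A \<times> ?B)"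
    using R by (rule nn_integral_cmult_indicator)
  also have "\<dots> = ennreal (w c c') * (emeasure M ?A * emeasure N ?B)"
    by (simp add: sigma_finite_measure.emeasure_pair_measure_Times[OF prob_space_imp_sigma_finite[OF pN] A B])
  also have "\<dots> = ennreal (w c c' * al c * be c')"
    using w_nonneg al_nonneg be_nonneg
    by (simp add: al_def be_def MN.M1.emeasure_eq_measure MN.M2.emeasure_eq_measure ennreal_mult mult.assoc)
  also have "\<dots> = ennreal (ga c c')" by (simp add: w_mult[OF c c'])
  finally show ?thesis .
qed

lemma int_Phi:
  "(\<integral>\<^sup>+p. ennreal (Phi k L (hh (fst p)) (hh (snd p))) \<partial>D) = (\<integral>\<^sup>+p. ennreal (Phi k L (cl k L (fst p)) (cl k L (snd p))) \<partial>C)"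
proof -
  have finD: "finite_measure D" using prob_D by (simp add: prob_space_def)
  have gD: "(\<lambda>p. (hh (fst p), hh (snd p))) \<in> D \<rightarrow>\<^sub>M count_space (CS \<times> CS)"
    using hhpair by (simp add: measurable_cong_sets[OF sets_D refl])
  have fin2: "finite (CS \<times> CS)" using finite_Cells by simp
  have "(\<integral>\<^sup>+p. ennreal (Phi k L (hh (fst p)) (hh (snd p))) \<partial>D)
     = ennreal (\<Sum>cc\<in>CS \<times> CS. Phi k L (fst cc) (snd cc) * measure D {p \<in> space D. (hh (fst p), hh (snd p)) = cc})"
    using nn_integral_fin_part[OF finD fin2 gD, of "\<lambda>cc. Phi k L (fst cc) (snd cc)"] Phi_nonneg by simp
  also have "\<dots> = ennreal (\<Sum>cc\<in>CS \<times> CS. Phi k L (fst cc) (snd cc) * ga (fst cc) (snd cc))"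
  proof (intro arg_cong[where f=ennreal] sum.cong refl)
    fix cc assume cc: "cc \<in> CS \<times> CS"
    have "{p \<in> space D. (hh (fst p), hh (snd p)) = cc} = {m \<in> space M. hh m = fst cc} \<times> {n \<in> space N. hh n = snd cc}"
      by (auto simp: space_D)
    then have "measure D {p \<in> space D. (hh (fst p), hh (snd p)) = cc} = ga (fst cc) (snd cc)"
      using D_rect[of "fst cc" "snd cc"] cc ga_nonneg by (auto simp: measure_def)
    then show "Phi k L (fst cc) (snd cc) * measure D {p \<in> space D. (hh (fst p), hh (snd p)) = cc} = Phi k L (fst cc) (snd cc) * ga (fst cc) (snd cc)"
      by simp
  qed
  also have "\<dots> = ennreal (\<Sum>cc\<in>CS \<times> CS. Phi k L (fst cc) (snd cc) * measure C {p \<in> space C. (cl k L (fst p), cl k L (snd p)) = cc})"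
    by (intro arg_cong[where f=ennreal] sum.cong refl) (auto simp: ga_def intro!: arg_cong[where f="measure C"])
  also have "\<dots> = (\<integral>\<^sup>+p. ennreal (Phi k L (cl k L (fst p)) (cl k L (snd p))) \<partial>C)"
    using nn_integral_fin_part[OF finC fin2 clpair, of "\<lambda>cc. Phi k L (fst cc) (snd cc)"] Phi_nonneg by simp
  finally show ?thesis .
qed

lemma space_M_SP: "space M = space SP" using sets_eq_imp_space_eq[OF sM] .
lemma space_N_SP: "space N = space SP" using sets_eq_imp_space_eq[OF sN] .

lemma strip_int:
  assumes Q: "prob_space Q" "sets Q = sets SP"
    and st1: "\<And>B. B \<in> sets borel \<Longrightarrow> B \<subseteq> {0..1} \<Longrightarrow> (\<integral>\<^sup>+m. emeasure m (B \<times> {0..1}) \<partial>Q) \<le> emeasure lborel B"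
    and st2: "\<And>B. B \<in> sets borel \<Longrightarrow> B \<subseteq> {0..1} \<Longrightarrow> (\<integral>\<^sup>+m. emeasure m ({0..1} \<times> B) \<partial>Q) \<le> emeasure lborel B"
    and eS: "eS \<in> sets borel" "eS \<subseteq> {0..1}" "emeasure lborel eS \<le> ennreal (1 / real k)"
    and eT: "eT \<in> sets borel" "eT \<subseteq> {0..1}" "emeasure lborel eT \<le> ennreal (1 / real k)"
  shows "(\<integral>\<^sup>+m. ennreal (measure m (eS \<times> {0..1}) + measure m ({0..1} \<times> eT)) \<partial>Q) \<le> ennreal (2 / real k)"
proof -
  have E1: "eS \<times> {0..1} \<in> sets sq_space" using eS by (auto simp: sets_sq intro!: times_borel)
  have E2: "{0..1} \<times> eT \<in> sets sq_space" using eT by (auto simp: sets_sq intro!: times_borel)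
  have spQ: "space Q = space SP" using sets_eq_imp_space_eq[OF Q(2)] .
  have m1: "(\<lambda>m. emeasure m (eS \<times> {0..1})) \<in> borel_measurable Q"
    using measurable_emeasure_subprob_algebra[OF E1] by (simp add: measurable_cong_sets[OF Q(2) refl])
  have m2: "(\<lambda>m. emeasure m ({0..1} \<times> eT)) \<in> borel_measurable Q"
    using measurable_emeasure_subprob_algebra[OF E2] by (simp add: measurable_cong_sets[OF Q(2) refl])
  have "(\<integral>\<^sup>+m. ennreal (measure m (eS \<times> {0..1}) + measure m ({0..1} \<times> eT)) \<partial>Q)
      = (\<integral>\<^sup>+m. emeasure m (eS \<times> {0..1}) + emeasure m ({0..1} \<times> eT) \<partial>Q)"
  proof (rule nn_integral_cong)
    fix m assume "m \<in> space Q"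
    then have "subprob_space m" "sets m = sets sq_space" using spQ space_SP by auto
    then have fm: "finite_measure m" and s: "eS \<times> {0..1} \<in> sets m" "{0..1} \<times> eT \<in> sets m"
      using E1 E2 by (auto intro: subprob_space.axioms)
    show "ennreal (measure m (eS \<times> {0..1}) + measure m ({0..1} \<times> eT)) = emeasure m (eS \<times> {0..1}) + emeasure m ({0..1} \<times> eT)"
      by (simp add: finite_measure.emeasure_eq_measure[OF fm] ennreal_plus)
  qed
  also have "\<dots> = (\<integral>\<^sup>+m. emeasure m (eS \<times> {0..1}) \<partial>Q) + (\<integral>\<^sup>+m. emeasure m ({0..1} \<times> eT) \<partial>Q)"
    by (rule nn_integral_add[OF m1 m2])
  also have "\<dots> \<le> emeasure lborel eS + emeasure lborel eT"
    by (intro add_mono st1 st2 eS eT)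
  also have "\<dots> \<le> ennreal (1 / real k) + ennreal (1 / real k)"
    by (intro add_mono eS eT)
  also have "\<dots> = ennreal (2 / real k)" by (simp add: ennreal_plus[symmetric] del: ennreal_plus)
  finally show ?thesis .
qed

lemma cost_bound:
  assumes stM1: "\<And>B. B \<in> sets borel \<Longrightarrow> B \<subseteq> {0..1} \<Longrightarrow> (\<integral>\<^sup>+m. emeasure m (B \<times> {0..1}) \<partial>M) \<le> emeasure lborel B"
    and stM2: "\<And>B. B \<in> sets borel \<Longrightarrow> B \<subseteq> {0..1} \<Longrightarrow> (\<integral>\<^sup>+m. emeasure m ({0..1} \<times> B) \<partial>M) \<le> emeasure lborel B"
    and stN1: "\<And>B. B \<in> sets borel \<Longrightarrow> B \<subseteq> {0..1} \<Longrightarrow> (\<integral>\<^sup>+m. emeasure m (B \<times> {0..1}) \<partial>N) \<le> emeasure lborel B"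
    and stN2: "\<And>B. B \<in> sets borel \<Longrightarrow> B \<subseteq> {0..1} \<Longrightarrow> (\<integral>\<^sup>+m. emeasure m ({0..1} \<times> B) \<partial>N) \<le> emeasure lborel B"
    and ST: "(S, T) \<in> Adm"
  shows "(\<integral>\<^sup>+mm. ennreal \<bar>measure (fst mm) (S \<times> T) - measure (snd mm) (S \<times> T)\<bar> \<partial>D)
     \<le> matcost k C + ennreal (4 * real (k^2) / real L) + ennreal (4 / real k)"
proof -
  obtain P Q eS eT where PQ: "P \<subseteq> {..<k}" "Q \<subseteq> {..<k}"
    and eS: "eS \<in> sets borel" "eS \<subseteq> {0..1}" "emeasure lborel eS \<le> ennreal (1 / real k)"
    and eT: "eT \<in> sets borel" "eT \<subseteq> {0..1}" "emeasure lborel eT \<le> ennreal (1 / real k)"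
    and ap: "\<And>m. m \<in> space SP \<Longrightarrow> \<bar>measure m (S \<times> T) - (\<Sum>ij\<in>P \<times> Q. Gv k m ij)\<bar>
        \<le> measure m (eS \<times> {0..1}) + measure m ({0..1} \<times> eT)"
    apply (rule approx_2d[OF k ST])
    apply (rule that)
    by assumption+
  define EM where "EM m = measure m (eS \<times> {0..1}) + measure m ({0..1} \<times> eT)" for m :: "(real \<times> real) measure"
  define c2 where "c2 = 2 * real (k^2) / real L"
  have c2: "0 \<le> c2" unfolding c2_def by simp
  have EMnn: "0 \<le> EM m" for m unfolding EM_def by simp
  have pw: "\<bar>measure m (S \<times> T) - measure n (S \<times> T)\<bar> \<le> Phi k L (hh m) (hh n) + c2 + EM m + EM n"
    if m: "m \<in> space SP" and n: "n \<in> space SP" for m n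
  proof -
    have "\<bar>(\<Sum>ij\<in>P \<times> Q. Gv k m ij) - (\<Sum>ij\<in>P \<times> Q. Gv k n ij)\<bar> \<le> (\<Sum>ij\<in>P \<times> Q. \<bar>Gv k m ij - Gv k n ij\<bar>)"
      by (simp only: sum_subtractf[symmetric] sum_abs)
    also have "\<dots> \<le> (\<Sum>ij\<in>{..<k} \<times> {..<k}. \<bar>Gv k m ij - Gv k n ij\<bar>)"
      using PQ by (intro sum_mono2) auto
    also have "\<dots> \<le> Phi k L (hh m) (hh n) + c2"
      unfolding hh_def c2_def by (rule Gv_Phi_le[OF L m n])
    finally have "\<bar>(\<Sum>ij\<in>P \<times> Q. Gv k m ij) - (\<Sum>ij\<in>P \<times> Q. Gv k n ij)\<bar> \<le> Phi k L (hh m) (hh n) + c2" .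
    then show ?thesis using ap[OF m] ap[OF n] unfolding EM_def by linarith
  qed
  have fD: "fst \<in> D \<rightarrow>\<^sub>M SP" using D_fst_meas by (simp add: measurable_cong_sets[OF refl sM])
  have sD: "snd \<in> D \<rightarrow>\<^sub>M SP" using D_snd_meas by (simp add: measurable_cong_sets[OF refl sN])
  have E1: "eS \<times> {0..1} \<in> sets sq_space" using eS by (auto simp: sets_sq intro!: times_borel)
  have E2: "{0..1} \<times> eT \<in> sets sq_space" using eT by (auto simp: sets_sq intro!: times_borel)
  have EMm: "(\<lambda>m. ennreal (EM m)) \<in> borel_measurable SP"
    unfolding EM_def using measure_SP_meas[OF E1] measure_SP_meas[OF E2] by measurable
  have f3: "(\<lambda>p. ennreal (EM (fst p))) \<in> borel_measurable D"
    using measurable_compose[OF fD EMm] by (simp add: comp_def)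
  have f4: "(\<lambda>p. ennreal (EM (snd p))) \<in> borel_measurable D"
    using measurable_compose[OF sD EMm] by (simp add: comp_def)
  have f1: "(\<lambda>p. ennreal (Phi k L (hh (fst p)) (hh (snd p)))) \<in> borel_measurable D"
    using measurable_compose[OF hhpair borel_measurable_count_space[of "\<lambda>cc. ennreal (Phi k L (fst cc) (snd cc))"]]
    by (simp add: comp_def measurable_cong_sets[OF sets_D refl])
  have "(\<integral>\<^sup>+mm. ennreal \<bar>measure (fst mm) (S \<times> T) - measure (snd mm) (S \<times> T)\<bar> \<partial>D)
     \<le> (\<integral>\<^sup>+p. ennreal (Phi k L (hh (fst p)) (hh (snd p))) + ennreal c2 + ennreal (EM (fst p)) + ennreal (EM (snd p)) \<partial>D)"
  proof (rule nn_integral_mono)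
    fix p assume p: "p \<in> space D"
    then have "fst p \<in> space SP" "snd p \<in> space SP" using space_M_SP space_N_SP by (auto simp: space_D)
    then have "ennreal \<bar>measure (fst p) (S \<times> T) - measure (snd p) (S \<times> T)\<bar>
        \<le> ennreal (Phi k L (hh (fst p)) (hh (snd p)) + c2 + EM (fst p) + EM (snd p))"
      by (intro ennreal_leI pw)
    also have "\<dots> = ennreal (Phi k L (hh (fst p)) (hh (snd p))) + ennreal c2 + ennreal (EM (fst p)) + ennreal (EM (snd p))"
      using Phi_nonneg c2 EMnn by (simp add: ennreal_plus)
    finally show "ennreal \<bar>measure (fst p) (S \<times> T) - measure (snd p) (S \<times> T)\<bar>
        \<le> ennreal (Phi k L (hh (fst p)) (hh (snd p))) + ennreal c2 + ennreal (EM (fst p)) + ennreal (EM (snd p))" .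
  qed
  also have "\<dots> = (\<integral>\<^sup>+p. ennreal (Phi k L (hh (fst p)) (hh (snd p))) \<partial>D) + ennreal c2
       + (\<integral>\<^sup>+p. ennreal (EM (fst p)) \<partial>D) + (\<integral>\<^sup>+p. ennreal (EM (snd p)) \<partial>D)"
  proof -
    note [measurable] = f1 f3 f4
    let ?a = "\<lambda>p. ennreal (Phi k L (hh (fst p)) (hh (snd p)))"
    let ?c = "\<lambda>p. ennreal (EM (fst p))"
    let ?d = "\<lambda>p. ennreal (EM (snd p))"
    have "(\<integral>\<^sup>+p. ?a p + ennreal c2 + ?c p + ?d p \<partial>D) = (\<integral>\<^sup>+p. ?a p + ennreal c2 + ?c p \<partial>D) + (\<integral>\<^sup>+p. ?d p \<partial>D)"
      by (rule nn_integral_add) measurable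
    also have "(\<integral>\<^sup>+p. ?a p + ennreal c2 + ?c p \<partial>D) = (\<integral>\<^sup>+p. ?a p + ennreal c2 \<partial>D) + (\<integral>\<^sup>+p. ?c p \<partial>D)"
      by (rule nn_integral_add) measurable
    also have "(\<integral>\<^sup>+p. ?a p + ennreal c2 \<partial>D) = (\<integral>\<^sup>+p. ?a p \<partial>D) + (\<integral>\<^sup>+p. ennreal c2 \<partial>D)"
      by (rule nn_integral_add) measurable
    also have "(\<integral>\<^sup>+p. ennreal c2 \<partial>D) = ennreal c2"
      using prob_space.emeasure_space_1[OF prob_D] by simp
    finally show ?thesis .
  qed
  also have "(\<integral>\<^sup>+p. ennreal (EM (fst p)) \<partial>D) = (\<integral>\<^sup>+m. ennreal (EM m) \<partial>M)"
  proof -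
    have "(\<integral>\<^sup>+m. ennreal (EM m) \<partial>distr D M fst) = (\<integral>\<^sup>+p. ennreal (EM (fst p)) \<partial>D)"
      using EMm by (intro nn_integral_distr[OF D_fst_meas]) (simp add: measurable_cong_sets[OF sM refl])
    then show ?thesis by (simp add: distr_D_fst)
  qed
  also have "(\<integral>\<^sup>+p. ennreal (EM (snd p)) \<partial>D) = (\<integral>\<^sup>+m. ennreal (EM m) \<partial>N)"
  proof -
    have "(\<integral>\<^sup>+m. ennreal (EM m) \<partial>distr D N snd) = (\<integral>\<^sup>+p. ennreal (EM (snd p)) \<partial>D)"
      using EMm by (intro nn_integral_distr[OF D_snd_meas]) (simp add: measurable_cong_sets[OF sN refl])
    then show ?thesis by (simp add: distr_D_snd)
  qed
  also have "(\<integral>\<^sup>+p. ennreal (Phi k L (hh (fst p)) (hh (snd p))) \<partial>D) \<le> matcost k C + ennreal c2"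
  proof -
    have "(\<integral>\<^sup>+p. ennreal (Phi k L (hh (fst p)) (hh (snd p))) \<partial>D) = (\<integral>\<^sup>+p. ennreal (Phi k L (cl k L (fst p)) (cl k L (snd p))) \<partial>C)"
      by (rule int_Phi)
    also have "\<dots> \<le> (\<integral>\<^sup>+p. ennreal (\<Sum>ij \<in> {..<k} \<times> {..<k}. \<bar>fst p ij - snd p ij\<bar>) + ennreal c2 \<partial>C)"
    proof (rule nn_integral_mono)
      fix p
      have "ennreal (Phi k L (cl k L (fst p)) (cl k L (snd p))) \<le> ennreal ((\<Sum>ij \<in> {..<k} \<times> {..<k}. \<bar>fst p ij - snd p ij\<bar>) + c2)"
        unfolding c2_def by (intro ennreal_leI Phi_cl_le[OF L])
      then show "ennreal (Phi k L (cl k L (fst p)) (cl k L (snd p))) \<le> ennreal (\<Sum>ij \<in> {..<k} \<times> {..<k}. \<bar>fst p ij - snd p ij\<bar>) + ennreal c2"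
        using c2 by (simp add: ennreal_plus sum_nonneg)
    qed
    also have "\<dots> = matcost k C + ennreal c2"
    proof -
      have mC: "(\<lambda>XY. ennreal (\<Sum>ij \<in> {..<k} \<times> {..<k}. \<bar>fst XY ij - snd XY ij\<bar>)) \<in> borel_measurable C"
        using matcost_integrand_meas[of k]
        by (simp add: measurable_cong_sets[OF CF(2) refl] measurable_cong_sets[OF sets_pair_measure_cong[OF sGM] refl])
      show ?thesis unfolding matcost_def using prob_space.emeasure_space_1[OF CF(1)]
        by (simp add: nn_integral_add mC)
    qed
    finally show ?thesis .
  qed
  also have "(\<integral>\<^sup>+m. ennreal (EM m) \<partial>M) \<le> ennreal (2 / real k)"
    unfolding EM_def by (rule strip_int[OF pM sM stM1 stM2 eS eT])
  also have "(\<integral>\<^sup>+m. ennreal (EM m) \<partial>N) \<le> ennreal (2 / real k)"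
    unfolding EM_def by (rule strip_int[OF pN sN stN1 stN2 eS eT])
  also have "matcost k C + ennreal c2 + ennreal c2 + ennreal (2 / real k) + ennreal (2 / real k)
      = matcost k C + ennreal (4 * real (k^2) / real L) + ennreal (4 / real k)"
  proof -
    have "ennreal c2 + ennreal c2 = ennreal (4 * real (k^2) / real L)"
      unfolding c2_def by (simp add: ennreal_plus[symmetric] del: ennreal_plus)
    moreover have "ennreal (2 / real k) + ennreal (2 / real k) = ennreal (4 / real k)"
      by (simp add: ennreal_plus[symmetric] del: ennreal_plus)
    ultimately show ?thesis by (simp add: add.assoc)
  qed
  finally show ?thesis by (simp add: add_mono add.assoc)
qed

end


lemma Inf_add_const:
  fixes g :: "'a \<Rightarrow> ennreal"
  assumes "A \<noteq> {}"
  shows "(INF x\<in>A. g x + c) = (INF x\<in>A. g x) + c"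
  using continuous_at_Inf_mono[of "\<lambda>x. x + c" "g ` A"]
  using continuous_add[of "at_right (Inf (g ` A))", of "\<lambda>x. x" "\<lambda>x. c"] assms
  by (auto simp: mono_def image_comp add_right_mono)

lemma second_ineq_L:
  assumes pM: "prob_space M" and pN: "prob_space N"
    and sM: "sets M = sets SP" and sN: "sets N = sets SP"
    and k: "k \<ge> 1" and L: "L \<ge> 1"
    and stM1: "\<And>B. B \<in> sets borel \<Longrightarrow> B \<subseteq> {0..1} \<Longrightarrow> (\<integral>\<^sup>+m. emeasure m (B \<times> {0..1}) \<partial>M) \<le> emeasure lborel B"
    and stM2: "\<And>B. B \<in> sets borel \<Longrightarrow> B \<subseteq> {0..1} \<Longrightarrow> (\<integral>\<^sup>+m. emeasure m ({0..1} \<times> B) \<partial>M) \<le> emeasure lborel B"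
    and stN1: "\<And>B. B \<in> sets borel \<Longrightarrow> B \<subseteq> {0..1} \<Longrightarrow> (\<integral>\<^sup>+m. emeasure m (B \<times> {0..1}) \<partial>N) \<le> emeasure lborel B"
    and stN2: "\<And>B. B \<in> sets borel \<Longrightarrow> B \<subseteq> {0..1} \<Longrightarrow> (\<integral>\<^sup>+m. emeasure m ({0..1} \<times> B) \<partial>N) \<le> emeasure lborel B"
  shows "W_box M N \<le> W_1 k (G_law k M) (G_law k N) + (ennreal (4 * real (k^2) / real L) + ennreal (4 / real k))"
proof (cases "couplings (G_law k M) (G_law k N) = {}")
  case True then show ?thesis by (simp add: W_1_alt)
next
  case False
  have "W_box M N \<le> (INF C \<in> couplings (G_law k M) (G_law k N). matcost k C + (ennreal (4 * real (k^2) / real L) + ennreal (4 / real k)))"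
  proof (rule INF_greatest)
    fix C assume C: "C \<in> couplings (G_law k M) (G_law k N)"
    interpret glue M N k L C using pM pN sM sN k L C by (simp add: glue_def)
    have "W_box M N \<le> boxcost D" unfolding W_box_alt by (rule INF_lower[OF D_coupling])
    also have "\<dots> \<le> matcost k C + ennreal (4 * real (k^2) / real L) + ennreal (4 / real k)"
      unfolding boxcost_def by (rule SUP_least) (clarify, rule cost_bound[OF stM1 stM2 stN1 stN2], assumption)
    finally show "W_box M N \<le> matcost k C + (ennreal (4 * real (k^2) / real L) + ennreal (4 / real k))"
      by (simp add: add.assoc)
  qed
  also have "\<dots> = W_1 k (G_law k M) (G_law k N) + (ennreal (4 * real (k^2) / real L) + ennreal (4 / real k))"
    unfolding W_1_alt by (rule Inf_add_const[OF False])
  finally show ?thesis .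
qed

lemma second_ineq:
  assumes pM: "prob_space M" and pN: "prob_space N"
    and sM: "sets M = sets SP" and sN: "sets N = sets SP"
    and k: "k \<ge> 1"
    and stM1: "\<And>B. B \<in> sets borel \<Longrightarrow> B \<subseteq> {0..1} \<Longrightarrow> (\<integral>\<^sup>+m. emeasure m (B \<times> {0..1}) \<partial>M) \<le> emeasure lborel B"
    and stM2: "\<And>B. B \<in> sets borel \<Longrightarrow> B \<subseteq> {0..1} \<Longrightarrow> (\<integral>\<^sup>+m. emeasure m ({0..1} \<times> B) \<partial>M) \<le> emeasure lborel B"
    and stN1: "\<And>B. B \<in> sets borel \<Longrightarrow> B \<subseteq> {0..1} \<Longrightarrow> (\<integral>\<^sup>+m. emeasure m (B \<times> {0..1}) \<partial>N) \<le> emeasure lborel B"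
    and stN2: "\<And>B. B \<in> sets borel \<Longrightarrow> B \<subseteq> {0..1} \<Longrightarrow> (\<integral>\<^sup>+m. emeasure m ({0..1} \<times> B) \<partial>N) \<le> emeasure lborel B"
  shows "W_box M N \<le> W_1 k (G_law k M) (G_law k N) + ennreal (4 / real k)"
proof (rule ennreal_le_epsilon)
  fix e :: real assume e: "0 < e"
  define L where "L = nat \<lceil>4 * real (k^2) / e\<rceil> + 1"
  have L1: "L \<ge> 1" unfolding L_def by simp
  have "4 * real (k^2) / e \<le> real L" unfolding L_def by linarith
  then have "4 * real (k^2) \<le> e * real L" using e by (simp add: field_simps)
  then have Le: "4 * real (k^2) / real L \<le> e" using L1 by (simp add: field_simps)
  have "W_box M N \<le> W_1 k (G_law k M) (G_law k N) + (ennreal (4 * real (k^2) / real L) + ennreal (4 / real k))"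
    by (rule second_ineq_L[OF pM pN sM sN k L1 stM1 stM2 stN1 stN2])
  also have "\<dots> \<le> W_1 k (G_law k M) (G_law k N) + (ennreal e + ennreal (4 / real k))"
    using Le by (intro add_left_mono add_right_mono ennreal_leI)
  finally show "W_box M N \<le> W_1 k (G_law k M) (G_law k N) + ennreal (4 / real k) + ennreal e"
    by (simp add: ac_simps)
qed

theorem mainTheorem4:
  fixes M N :: "(real \<times> real) measure measure" and k :: nat
  assumes "M \<in> grapheurs" and "N \<in> grapheurs" and "k \<ge> 1"
  shows "W_1 k (G_law k M) (G_law k N) \<le> of_nat (k^2) * W_box M N \<and>
         W_box M N \<le> W_1 k (G_law k M) (G_law k N) + ennreal (4 / real k)"
proof
  note GM = grapheur_props[OF assms(1)] and GN = grapheur_props[OF assms(2)]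
  show "W_1 k (G_law k M) (G_law k N) \<le> of_nat (k^2) * W_box M N"
    by (rule first_ineq[OF GM(2) GN(2) assms(3)])
  show "W_box M N \<le> W_1 k (G_law k M) (G_law k N) + ennreal (4 / real k)"
    by (rule second_ineq[OF GM(1) GN(1) GM(2) GN(2) assms(3) GM(3) GM(4) GN(3) GN(4)])
qed


end
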